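(* Fix $\gamma>0$ and let $\alpha=\gamma/(1+\gamma)$. For each $n$ let $(\Theta_n(t),t\ge0)$ be Kingman's coalescent on partitions of $\{1,\dots,n\}$, let $\Psi_n(t)=\Theta_n\big(t^{\gamma+1}/(\gamma+1)\big)$, and for $1\le k\le n$ let $U_k=\inf\{t:|\Psi_n(t)|=k\}$, where $|\pi|$ is the number of blocks of $\pi$. Let $m=\lceil n^{3/4}\rceil+1$ and $L_n'=\sum_{k=m}^{n}k\,(U_{k-1}-U_k)$. Then $$\lim_{n\to\infty}\frac{L_n'}{n^{\alpha}}=\frac{2^{1-\alpha}(1-\alpha)^{\alpha}\pi}{\sin(\pi\alpha)}\quad\text{in probability}.$$
   Context: Kingman's coalescent $(\Theta_n(t),t\ge0)$ is the continuous-time time-homogeneous Markov chain on partitions of $\{1,\dots,n\}$ with $\Theta_n(0)=\{\{1\},\dots,\{n\}\}$, in which each pair of blocks merges into one at rate $1$ and no other transitions occur. *)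

theory Defs
  imports "HOL-Probability.Probability"
begin

definition blocks_sorted :: "nat set set \<Rightarrow> nat set list" where
  "blocks_sorted \<pi> = map (\<lambda>m. THE B. B \<in> \<pi> \<and> m \<in> B) (sorted_list_of_set (Min ` \<pi>))"

definition merge_pair :: "nat set set \<Rightarrow> nat \<times> nat \<Rightarrow> nat set set" where
  "merge_pair \<pi> p = (let bs = blocks_sorted \<pi>; B1 = bs ! fst p; B2 = bs ! snd p
                      in (\<pi> - {B1, B2}) \<union> {B1 \<union> B2})"

definition block_pairs :: "nat \<Rightarrow> (nat \<times> nat) set" where
  "block_pairs k = {(i, j). i < j \<and> j < k}"

text \<open>Jump chain: state after d merges, started from the singletons of {1..n};
  the merge performed with k blocks present uses the choice v k.\<close>
fun jump_chain :: "nat \<Rightarrow> (nat \<Rightarrow> nat \<times> nat) \<Rightarrow> nat \<Rightarrow> nat set set" where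
  "jump_chain n v 0 = (\<lambda>i. {i}) ` {1..n}"
| "jump_chain n v (Suc d) = merge_pair (jump_chain n v d) (v (n - d))"

text \<open>Continuous-time path: e k is the holding time while there are k blocks;
  the jump out of state j happens at time e n + ... + e j.\<close>
definition coal_path :: "nat \<Rightarrow> (nat \<Rightarrow> real) \<Rightarrow> (nat \<Rightarrow> nat \<times> nat) \<Rightarrow> real \<Rightarrow> nat set set" where
  "coal_path n e v t = jump_chain n v (card {j \<in> {2..n}. (\<Sum>i=j..n. e i) \<le> t})"

text \<open>Kingman's coalescent on partitions of {1..n}, via the standard construction:
  independent holding times E k ~ Exp(k choose 2) (each pair of blocks merges at rate 1)
  and uniform choices V k of the pair of blocks to merge, all mutually independent
  (independence of the family with index Inl k for E k and Inr k for V k).\<close>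
definition kingman_coalescent ::
  "'w measure \<Rightarrow> nat \<Rightarrow> (real \<Rightarrow> 'w \<Rightarrow> nat set set) \<Rightarrow> bool" where
  "kingman_coalescent M n \<Theta> \<longleftrightarrow>
     (\<exists>(E :: nat \<Rightarrow> 'w \<Rightarrow> real) (V :: nat \<Rightarrow> 'w \<Rightarrow> nat \<times> nat).
        (\<forall>k\<in>{2..n}. distributed M lborel (E k)
              (\<lambda>x. ennreal (exponential_density (real (k choose 2)) x))) \<and>
        (\<forall>k\<in>{2..n}. V k \<in> measurable M (count_space UNIV) \<and>
              (\<forall>p\<in>block_pairs k. prob_space.prob M {\<omega> \<in> space M. V k \<omega> = p}
                                    = 1 / real (card (block_pairs k)))) \<and>
        prob_space.indep_vars M (\<lambda>_. borel \<Otimes>\<^sub>M count_space UNIV)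
              (\<lambda>i \<omega>. case i of Inl k \<Rightarrow> (E k \<omega>, (0, 0)) | Inr k \<Rightarrow> (0, V k \<omega>))
              (Inl ` {2..n} \<union> Inr ` {2..n}) \<and>
        (\<forall>\<omega>\<in>space M. \<forall>t\<ge>0. \<Theta> t \<omega> = coal_path n (\<lambda>k. E k \<omega>) (\<lambda>k. V k \<omega>) t))"

definition U_time :: "real \<Rightarrow> (real \<Rightarrow> 'w \<Rightarrow> nat set set) \<Rightarrow> nat \<Rightarrow> 'w \<Rightarrow> real" where
  "U_time \<gamma> \<Theta> k \<omega> =
     Inf {t. 0 \<le> t \<and> card (\<Theta> (t powr (\<gamma> + 1) / (\<gamma> + 1)) \<omega>) = k}"

definition L_prime :: "real \<Rightarrow> nat \<Rightarrow> (real \<Rightarrow> 'w \<Rightarrow> nat set set) \<Rightarrow> 'w \<Rightarrow> real" where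
  "L_prime \<gamma> n \<Theta> \<omega> =
     (let m = nat \<lceil>real n powr (3/4)\<rceil> + 1 in
      \<Sum>k=m..n. real k * (U_time \<gamma> \<Theta> (k - 1) \<omega> - U_time \<gamma> \<Theta> k \<omega>))"

end

theory Submission
  imports Defs "HOL-Real_Asymp.Real_Asymp"
begin


definition okp :: "nat set set \<Rightarrow> bool" where
  "okp \<pi> \<longleftrightarrow> finite \<pi> \<and> (\<forall>B\<in>\<pi>. B \<noteq> {} \<and> finite B) \<and> (\<forall>B\<in>\<pi>. \<forall>C\<in>\<pi>. B \<noteq> C \<longrightarrow> B \<inter> C = {})"

lemma okpD: assumes "okp \<pi>"
  shows "finite \<pi>" "\<And>B. B \<in> \<pi> \<Longrightarrow> B \<noteq> {}" "\<And>B. B \<in> \<pi> \<Longrightarrow> finite B"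
    "\<And>B C. B \<in> \<pi> \<Longrightarrow> C \<in> \<pi> \<Longrightarrow> B \<noteq> C \<Longrightarrow> B \<inter> C = {}"
  using assms unfolding okp_def by auto

lemma okp_the:
  assumes "okp \<pi>" "B \<in> \<pi>"
  shows "(THE C. C \<in> \<pi> \<and> Min B \<in> C) = B"
proof -
  have mb: "Min B \<in> B" using okpD(2,3)[OF assms(1) assms(2)] by (rule Min_in[rotated])
  show ?thesis
  proof (rule the_equality)
    show "B \<in> \<pi> \<and> Min B \<in> B" using assms(2) mb by simp
    fix C assume C: "C \<in> \<pi> \<and> Min B \<in> C"
    show "C = B"
    proof (rule ccontr)
      assume "C \<noteq> B"
      then have "C \<inter> B = {}" using okpD(4)[OF assms(1)] C assms(2) by simp
      then show False using C mb by blast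
    qed
  qed
qed

lemma okp_blocks:
  assumes "okp \<pi>"
  shows "length (blocks_sorted \<pi>) = card \<pi>" "distinct (blocks_sorted \<pi>)" "set (blocks_sorted \<pi>) = \<pi>"
proof -
  have fin: "finite \<pi>" using okpD(1)[OF assms] .
  define g where "g = (\<lambda>m. THE B. B \<in> \<pi> \<and> m \<in> B)"
  have bs: "blocks_sorted \<pi> = map g (sorted_list_of_set (Min ` \<pi>))"
    unfolding blocks_sorted_def g_def ..
  have g: "g (Min B) = B" if "B \<in> \<pi>" for B unfolding g_def using okp_the[OF assms that] .
  have inj: "inj_on Min \<pi>"
  proof (rule inj_onI)
    fix B C assume BC: "B \<in> \<pi>" "C \<in> \<pi>" "Min B = Min C"
    have "B = g (Min B)" using g[OF BC(1)] by simp
    also have "\<dots> = g (Min C)" using BC(3) by simp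
    also have "\<dots> = C" using g[OF BC(2)] by simp
    finally show "B = C" .
  qed
  have ginj: "inj_on g (Min ` \<pi>)"
  proof (rule inj_onI)
    fix x y assume "x \<in> Min ` \<pi>" "y \<in> Min ` \<pi>" "g x = g y"
    then obtain B C where BC: "B \<in> \<pi>" "C \<in> \<pi>" "x = Min B" "y = Min C" "g x = g y" by blast
    then have "B = C" using g[OF BC(1)] g[OF BC(2)] by simp
    then show "x = y" using BC by simp
  qed
  have sl: "set (sorted_list_of_set (Min ` \<pi>)) = Min ` \<pi>" using fin by simp
  show "length (blocks_sorted \<pi>) = card \<pi>"
    unfolding bs using fin inj by (simp add: card_image)
  show "distinct (blocks_sorted \<pi>)"
    unfolding bs using fin ginj by (simp add: distinct_map)
  have "g ` Min ` \<pi> = \<pi>"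
  proof
    show "g ` Min ` \<pi> \<subseteq> \<pi>"
    proof
      fix x assume "x \<in> g ` Min ` \<pi>"
      then obtain B where "B \<in> \<pi>" "x = g (Min B)" by blast
      then show "x \<in> \<pi>" using g by simp
    qed
    show "\<pi> \<subseteq> g ` Min ` \<pi>"
    proof
      fix B assume B: "B \<in> \<pi>" then have "g (Min B) \<in> g ` Min ` \<pi>" by blast
      then show "B \<in> g ` Min ` \<pi>" using g[OF B] by simp
    qed
  qed
  then show "set (blocks_sorted \<pi>) = \<pi>"
    unfolding bs using sl by simp
qed

lemma okp_merge:
  assumes "okp \<pi>" "fst p < snd p" "snd p < card \<pi>"
  shows "okp (merge_pair \<pi> p) \<and> card (merge_pair \<pi> p) = card \<pi> - 1"
proof -
  note bs = okp_blocks[OF assms(1)]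
  define B1 where "B1 = blocks_sorted \<pi> ! fst p"
  define B2 where "B2 = blocks_sorted \<pi> ! snd p"
  have B1: "B1 \<in> \<pi>" unfolding B1_def using bs assms(2,3) by (metis less_trans nth_mem)
  have B2: "B2 \<in> \<pi>" unfolding B2_def using bs assms(2,3) by (metis nth_mem)
  have ne: "B1 \<noteq> B2" unfolding B1_def B2_def using bs assms(2,3)
    by (simp add: nth_eq_iff_index_eq)
  have m: "merge_pair \<pi> p = (\<pi> - {B1, B2}) \<union> {B1 \<union> B2}"
    unfolding merge_pair_def B1_def B2_def Let_def by simp
  have fin: "finite \<pi>" using okpD(1)[OF assms(1)] .
  have notin: "B1 \<union> B2 \<notin> \<pi> - {B1, B2}"
  proof
    assume "B1 \<union> B2 \<in> \<pi> - {B1, B2}"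
    then have "B1 \<union> B2 \<in> \<pi>" "B1 \<union> B2 \<noteq> B1" by auto
    with B1 okpD(4)[OF assms(1)] have "(B1 \<union> B2) \<inter> B1 = {}" by blast
    with okpD(2)[OF assms(1) B1] show False by auto
  qed
  have c1: "card (\<pi> - {B1, B2}) = card \<pi> - 2" using B1 B2 ne fin by (simp add: card_Diff_subset)
  have "card (merge_pair \<pi> p) = card \<pi> - 2 + 1" unfolding m using notin fin c1 by simp
  moreover have "card \<pi> \<ge> 2" using B1 B2 ne fin
    by (metis card_2_iff card_mono empty_subsetI insert_subset)
  ultimately have c: "card (merge_pair \<pi> p) = card \<pi> - 1" by simp
  have "okp (merge_pair \<pi> p)"
    unfolding m okp_def
  proof (intro conjI ballI impI)
    show "finite (\<pi> - {B1, B2} \<union> {B1 \<union> B2})" using fin by simp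
  next
    fix B assume "B \<in> \<pi> - {B1, B2} \<union> {B1 \<union> B2}"
    then show "B \<noteq> {}" using okpD(2)[OF assms(1)] B1 B2 by auto
  next
    fix B assume "B \<in> \<pi> - {B1, B2} \<union> {B1 \<union> B2}"
    then show "finite B" using okpD(3)[OF assms(1)] B1 B2 by auto
  next
    fix B C assume BC: "B \<in> \<pi> - {B1, B2} \<union> {B1 \<union> B2}" "C \<in> \<pi> - {B1, B2} \<union> {B1 \<union> B2}" "B \<noteq> C"
    have d: "\<And>X Y. X \<in> \<pi> \<Longrightarrow> Y \<in> \<pi> \<Longrightarrow> X \<noteq> Y \<Longrightarrow> X \<inter> Y = {}"
      using okpD(4)[OF assms(1)] by blast
    show "B \<inter> C = {}"
    proof (cases "B = B1 \<union> B2")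
      case True
      then have "C \<in> \<pi>" "C \<noteq> B1" "C \<noteq> B2" using BC by auto
      then show ?thesis using True d[OF B1, of C] d[OF B2, of C] by auto
    next
      case False
      then have Bp: "B \<in> \<pi>" "B \<noteq> B1" "B \<noteq> B2" using BC by auto
      show ?thesis
      proof (cases "C = B1 \<union> B2")
        case True
        then show ?thesis using Bp d[OF B1, of B] d[OF B2, of B] by auto
      next
        case False
        then have "C \<in> \<pi>" using BC by auto
        then show ?thesis using d Bp BC(3) by blast
      qed
    qed
  qed
  with c show ?thesis by simp
qed

lemma jump_chain_card:
  assumes "\<forall>k\<in>{2..n}. v k \<in> block_pairs k" "d < n"
  shows "okp (jump_chain n v d) \<and> card (jump_chain n v d) = n - d"
  using assms(2)
proof (induction d)
  case 0
  have "card ((\<lambda>i. {i}) ` {1..n}) = n" by (subst card_image) (auto simp: inj_on_def)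
  moreover have "okp ((\<lambda>i. {i}) ` {1..n})" by (auto simp: okp_def)
  ultimately show ?case by simp
next
  case (Suc d)
  then have IH: "okp (jump_chain n v d)" "card (jump_chain n v d) = n - d" by auto
  have "n - d \<in> {2..n}" using Suc.prems by auto
  then have "v (n - d) \<in> block_pairs (n - d)" using assms(1) by blast
  then have "fst (v (n-d)) < snd (v (n-d))" "snd (v (n-d)) < card (jump_chain n v d)"
    using IH by (auto simp: block_pairs_def split: prod.splits)
  from okp_merge[OF IH(1) this] show ?case using Suc.prems IH(2) by simp
qed


lemma T_mono:
  fixes e :: "nat \<Rightarrow> real"
  assumes pos: "\<forall>i\<in>{2..n}. e i > 0" and "2 \<le> j" "j \<le> j'"
  shows "(\<Sum>i=j'..n. e i) \<le> (\<Sum>i=j..n. e i)"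
proof (cases "j' \<le> n")
  case True
  have "{j..n} = {j..<j'} \<union> {j'..n}" using assms True by auto
  then have "(\<Sum>i=j..n. e i) = (\<Sum>i\<in>{j..<j'}. e i) + (\<Sum>i=j'..n. e i)"
    by (simp add: sum.union_disjoint ivl_disj_int)
  moreover have "(\<Sum>i\<in>{j..<j'}. e i) \<ge> 0" using pos assms(2) True by (intro sum_nonneg) (auto intro: less_imp_le)
  ultimately show ?thesis by simp
next
  case False
  have "(\<Sum>i=j..n. e i) \<ge> 0" using pos assms(2) by (intro sum_nonneg) (auto intro: less_imp_le)
  then show ?thesis using False by simp
qed

lemma T_strict:
  fixes e :: "nat \<Rightarrow> real"
  assumes pos: "\<forall>i\<in>{2..n}. e i > 0" and "2 \<le> j" "j < j'" "j \<le> n"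
  shows "(\<Sum>i=j'..n. e i) < (\<Sum>i=j..n. e i)"
proof -
  have "(\<Sum>i=j..n. e i) = e j + (\<Sum>i=Suc j..n. e i)" using assms by (simp add: sum.atLeast_Suc_atMost)
  moreover have "(\<Sum>i=j'..n. e i) \<le> (\<Sum>i=Suc j..n. e i)" using T_mono[OF pos, of "Suc j" j'] assms by simp
  moreover have "e j > 0" using pos assms by auto
  ultimately show ?thesis by simp
qed

lemma cnt_char:
  fixes e :: "nat \<Rightarrow> real"
  assumes pos: "\<forall>i\<in>{2..n}. e i > 0" and k: "1 \<le> k" "k \<le> n" and s: "0 \<le> s"
  shows "card {j \<in> {2..n}. (\<Sum>i=j..n. e i) \<le> s} = n - k \<longleftrightarrow>
         ((\<Sum>i=k+1..n. e i) \<le> s \<and> (2 \<le> k \<longrightarrow> s < (\<Sum>i=k..n. e i)))"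
  (is "card ?S = _ \<longleftrightarrow> _")
proof
  assume R: "(\<Sum>i=k+1..n. e i) \<le> s \<and> (2 \<le> k \<longrightarrow> s < (\<Sum>i=k..n. e i))"
  have "?S = {k+1..n}"
  proof (intro set_eqI iffI)
    fix j assume "j \<in> ?S"
    then have j: "2 \<le> j" "j \<le> n" "(\<Sum>i=j..n. e i) \<le> s" by auto
    show "j \<in> {k+1..n}"
    proof (rule ccontr)
      assume "j \<notin> {k+1..n}"
      then have "j \<le> k" using j by auto
      then have "(\<Sum>i=k..n. e i) \<le> (\<Sum>i=j..n. e i)" using T_mono[OF pos j(1)] by blast
      then show False using R j \<open>j \<le> k\<close> by auto
    qed
  next
    fix j assume "j \<in> {k+1..n}"
    then have j: "k + 1 \<le> j" "j \<le> n" by auto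
    then have "(\<Sum>i=j..n. e i) \<le> (\<Sum>i=k+1..n. e i)" using T_mono[OF pos, of "k+1" j] k by auto
    then show "j \<in> ?S" using R j k by auto
  qed
  then show "card ?S = n - k" by simp
next
  assume C: "card ?S = n - k"
  have fin: "finite ?S" by simp
  show "(\<Sum>i=k+1..n. e i) \<le> s \<and> (2 \<le> k \<longrightarrow> s < (\<Sum>i=k..n. e i))"
  proof (intro conjI impI)
    show "(\<Sum>i=k+1..n. e i) \<le> s"
    proof (rule ccontr)
      assume A: "\<not> (\<Sum>i=k+1..n. e i) \<le> s"
      then have kn: "k + 1 \<le> n" using s by (cases "k+1 \<le> n") auto
      have "?S \<subseteq> {k+2..n}"
      proof
        fix j assume "j \<in> ?S"
        then have j: "2 \<le> j" "j \<le> n" "(\<Sum>i=j..n. e i) \<le> s" by auto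
        show "j \<in> {k+2..n}"
        proof (rule ccontr)
          assume "j \<notin> {k+2..n}"
          then have "j \<le> k + 1" using j by auto
          then have "(\<Sum>i=k+1..n. e i) \<le> (\<Sum>i=j..n. e i)" using T_mono[OF pos j(1)] by blast
          then show False using A j by auto
        qed
      qed
      then have "card ?S \<le> card {k+2..n}" by (intro card_mono) auto
      then show False using C kn by simp
    qed
  next
    assume k2: "2 \<le> k"
    show "s < (\<Sum>i=k..n. e i)"
    proof (rule ccontr)
      assume A: "\<not> s < (\<Sum>i=k..n. e i)"
      have "{k..n} \<subseteq> ?S"
      proof
        fix j assume "j \<in> {k..n}"
        then have j: "k \<le> j" "j \<le> n" by auto
        then have "(\<Sum>i=j..n. e i) \<le> (\<Sum>i=k..n. e i)" using T_mono[OF pos k2] by blast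
        then show "j \<in> ?S" using A j k2 by auto
      qed
      then have "card {k..n} \<le> card ?S" by (intro card_mono) auto
      then show False using C k by simp
    qed
  qed
qed

definition phi :: "real \<Rightarrow> real \<Rightarrow> real" where "phi \<gamma> t = t powr (\<gamma> + 1) / (\<gamma> + 1)"
definition psi :: "real \<Rightarrow> real \<Rightarrow> real" where "psi \<gamma> s = ((\<gamma> + 1) * s) powr (1 / (\<gamma> + 1))"

lemma phi_psi: "\<gamma> > 0 \<Longrightarrow> s \<ge> 0 \<Longrightarrow> phi \<gamma> (psi \<gamma> s) = s"
  unfolding phi_def psi_def by (simp add: powr_powr)

lemma psi_phi: "\<gamma> > 0 \<Longrightarrow> t \<ge> 0 \<Longrightarrow> psi \<gamma> (phi \<gamma> t) = t"
  unfolding phi_def psi_def by (simp add: powr_powr)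

lemma phi_nonneg: "\<gamma> > 0 \<Longrightarrow> t \<ge> 0 \<Longrightarrow> phi \<gamma> t \<ge> 0"
  unfolding phi_def by simp

lemma psi_nonneg: "psi \<gamma> s \<ge> 0"
  unfolding psi_def by simp

lemma phi_mono: "\<gamma> > 0 \<Longrightarrow> 0 \<le> t \<Longrightarrow> t \<le> t' \<Longrightarrow> phi \<gamma> t \<le> phi \<gamma> t'"
  unfolding phi_def by (intro divide_right_mono powr_mono2) auto

lemma phi_strict: "\<gamma> > 0 \<Longrightarrow> 0 \<le> t \<Longrightarrow> t < t' \<Longrightarrow> phi \<gamma> t < phi \<gamma> t'"
  unfolding phi_def by (intro divide_strict_right_mono powr_less_mono2) auto

lemma psi_strict: "\<gamma> > 0 \<Longrightarrow> 0 \<le> s \<Longrightarrow> s < s' \<Longrightarrow> psi \<gamma> s < psi \<gamma> s'"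
  unfolding psi_def by (intro powr_less_mono2) auto

lemma phi_ge_iff: "\<gamma> > 0 \<Longrightarrow> 0 \<le> t \<Longrightarrow> 0 \<le> a \<Longrightarrow> a \<le> phi \<gamma> t \<longleftrightarrow> psi \<gamma> a \<le> t"
  by (metis phi_mono phi_psi phi_strict psi_nonneg not_le)

lemma phi_less_iff: "\<gamma> > 0 \<Longrightarrow> 0 \<le> t \<Longrightarrow> 0 \<le> b \<Longrightarrow> phi \<gamma> t < b \<longleftrightarrow> t < psi \<gamma> b"
  by (metis phi_ge_iff not_le)


lemma U_time_eq:
  fixes E :: "nat \<Rightarrow> 'w \<Rightarrow> real" and V :: "nat \<Rightarrow> 'w \<Rightarrow> nat \<times> nat"
  assumes g: "\<gamma> > 0" and n: "1 \<le> n"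
    and pos: "\<forall>i\<in>{2..n}. E i \<omega> > 0" and val: "\<forall>k\<in>{2..n}. V k \<omega> \<in> block_pairs k"
    and Th: "\<forall>t\<ge>0. \<Theta> t \<omega> = coal_path n (\<lambda>k. E k \<omega>) (\<lambda>k. V k \<omega>) t"
    and k: "1 \<le> k" "k \<le> n"
  shows "U_time \<gamma> \<Theta> k \<omega> = psi \<gamma> (\<Sum>i=k+1..n. E i \<omega>)"
proof -
  define e where "e = (\<lambda>i. E i \<omega>)"
  define v where "v = (\<lambda>i. V i \<omega>)"
  have pos': "\<forall>i\<in>{2..n}. e i > 0" using pos by (simp add: e_def)
  define T where "T = (\<lambda>j. \<Sum>i=j..n. e i)"
  define cnt where "cnt = (\<lambda>s. card {j \<in> {2..n}. T j \<le> s})"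
  have cnt_le: "cnt s \<le> n - 1" for s
  proof -
    have "cnt s \<le> card {2..n}" unfolding cnt_def by (intro card_mono) auto
    then show ?thesis by simp
  qed
  have card_eq: "card (\<Theta> (phi \<gamma> t) \<omega>) = n - cnt (phi \<gamma> t)" if "t \<ge> 0" for t
  proof -
    have "\<Theta> (phi \<gamma> t) \<omega> = jump_chain n v (cnt (phi \<gamma> t))"
      using Th phi_nonneg[OF g that] unfolding coal_path_def cnt_def T_def e_def v_def by simp
    moreover have "cnt (phi \<gamma> t) < n" using cnt_le[of "phi \<gamma> t"] n by linarith
    ultimately show ?thesis using jump_chain_card[of n v] val unfolding v_def by simp
  qed
  have T0: "T j \<ge> 0" if "2 \<le> j" for j
    unfolding T_def using pos' that by (intro sum_nonneg) (auto intro: less_imp_le)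
  let ?S = "{t. 0 \<le> t \<and> card (\<Theta> (t powr (\<gamma> + 1) / (\<gamma> + 1)) \<omega>) = k}"
  have S: "?S = {t. 0 \<le> t \<and> T (k+1) \<le> phi \<gamma> t \<and> (2 \<le> k \<longrightarrow> phi \<gamma> t < T k)}"
  proof (intro set_eqI iffI)
    fix t assume "t \<in> ?S"
    then have t: "0 \<le> t" "card (\<Theta> (phi \<gamma> t) \<omega>) = k" by (auto simp: phi_def)
    then have "cnt (phi \<gamma> t) = n - k" using card_eq[OF t(1)] k cnt_le[of "phi \<gamma> t"] by simp
    then show "t \<in> {t. 0 \<le> t \<and> T (k+1) \<le> phi \<gamma> t \<and> (2 \<le> k \<longrightarrow> phi \<gamma> t < T k)}"
      using cnt_char[OF pos' k phi_nonneg[OF g t(1)]] t(1) unfolding cnt_def T_def by simp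
  next
    fix t assume "t \<in> {t. 0 \<le> t \<and> T (k+1) \<le> phi \<gamma> t \<and> (2 \<le> k \<longrightarrow> phi \<gamma> t < T k)}"
    then have t: "0 \<le> t" "T (k+1) \<le> phi \<gamma> t" "2 \<le> k \<longrightarrow> phi \<gamma> t < T k" by auto
    then have "cnt (phi \<gamma> t) = n - k"
      using cnt_char[OF pos' k phi_nonneg[OF g t(1)]] unfolding cnt_def T_def by simp
    then have "card (\<Theta> (phi \<gamma> t) \<omega>) = k" using card_eq[OF t(1)] k by simp
    then show "t \<in> ?S" using t(1) by (simp add: phi_def)
  qed
  have Tk1: "T (k+1) \<ge> 0" using T0[of "k+1"] k by simp
  have "Inf ?S = psi \<gamma> (T (k+1))"
    unfolding S
  proof (rule cInf_eq_minimum)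
    have "2 \<le> k \<longrightarrow> T (k+1) < T k"
      using T_strict[OF pos', of k "k+1"] k unfolding T_def by auto
    then show "psi \<gamma> (T (k+1)) \<in> {t. 0 \<le> t \<and> T (k+1) \<le> phi \<gamma> t \<and> (2 \<le> k \<longrightarrow> phi \<gamma> t < T k)}"
      using phi_psi[OF g Tk1] psi_nonneg[of \<gamma> "T (k+1)"] by simp
  next
    fix t assume "t \<in> {t. 0 \<le> t \<and> T (k+1) \<le> phi \<gamma> t \<and> (2 \<le> k \<longrightarrow> phi \<gamma> t < T k)}"
    then show "psi \<gamma> (T (k+1)) \<le> t" using phi_ge_iff[OF g _ Tk1] by auto
  qed
  then show ?thesis unfolding U_time_def T_def e_def by simp
qed


lemma integral_pieces:
  fixes f :: "real \<Rightarrow> real"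
  assumes int: "f integrable_on {0..1}" and n: "n > 0" and lh: "l \<le> h" "h \<le> n"
  shows "(\<Sum>j\<in>{l..<h}. integral {real j / n..real (j+1) / n} f) = integral {real l / n..real h / n} f"
  using lh
proof (induction h)
  case 0 then show ?case by simp
next
  case (Suc h)
  show ?case
  proof (cases "l = Suc h")
    case True then show ?thesis by simp
  next
    case False
    then have lh': "l \<le> h" "h \<le> n" using Suc.prems by auto
    have "(\<Sum>j\<in>{l..<Suc h}. integral {real j / n..real (j+1) / n} f)
          = integral {real l / n..real h / n} f + integral {real h / n..real (Suc h) / n} f"
      using Suc.IH[OF lh'] lh' by simp
    also have "\<dots> = integral {real l / n..real (Suc h) / n} f"
    proof -
      have 1: "real l / n \<le> real h / n" using lh' n by (simp add: divide_right_mono)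
      have 2: "real h / n \<le> real (Suc h) / n" using n by (simp add: divide_right_mono)
      have 3: "f integrable_on {real l / n..real (Suc h) / n}"
        using Suc.prems n by (intro integrable_subinterval_real[OF int]) (auto simp: field_simps)
      show ?thesis using Henstock_Kurzweil_Integration.integral_combine[OF 1 2 3] .
    qed
    finally show ?thesis .
  qed
qed

lemma riemann_bounds:
  fixes f :: "real \<Rightarrow> real"
  assumes int: "f integrable_on {0..1}"
    and dec: "\<And>x y. 0 < x \<Longrightarrow> x \<le> y \<Longrightarrow> y \<le> 1 \<Longrightarrow> f y \<le> f x"
    and nn: "\<And>x. 0 \<le> x \<Longrightarrow> x \<le> 1 \<Longrightarrow> 0 \<le> f x"
    and a: "2 \<le> a" "a \<le> n"
  shows "(\<Sum>j=a..n-1. f (real j / n)) / n \<le> integral {0..1} f"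
    and "integral {real a / n..1} f \<le> (\<Sum>j=a..n-1. f (real j / n)) / n"
proof -
  have n: "n > 0" using a by simp
  have ni: "f integrable_on {c..d}" if "0 \<le> c" "d \<le> 1" for c d
    using that by (intro integrable_subinterval_real[OF int]) auto
  have up: "f (real j / n) / n \<le> integral {real (j-1) / n..real (j-1+1) / n} f" if j: "2 \<le> j" "j \<le> n" for j
  proof -
    have e: "real (j-1+1) = real j" using j by simp
    have "f (real j / n) / n = integral {real (j-1) / n..real j / n} (\<lambda>x. f (real j / n))"
      using j n by (simp add: of_nat_diff field_simps)
    also have "\<dots> \<le> integral {real (j-1) / n..real j / n} f"
    proof (rule integral_le)
      show "f integrable_on {real (j-1) / n..real j / n}" using j by (intro ni) auto
      fix x assume x: "x \<in> {real (j-1) / n..real j / n}"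
      have "0 < real (j-1) / n" using j n by simp
      moreover have "real (j-1) / n \<le> x" "x \<le> real j / n" using x by auto
      ultimately have "0 < x" by linarith
      moreover have "real j / n \<le> 1" using j n by simp
      ultimately show "f (real j / n) \<le> f x" using \<open>x \<le> real j / n\<close> by (intro dec) auto
    qed (auto intro: integrable_const_ivl)
    finally show ?thesis unfolding e .
  qed
  have lo: "integral {real j / n..real (j+1) / n} f \<le> f (real j / n) / n" if j: "1 \<le> j" "j \<le> n - 1" for j
  proof -
    have "integral {real j / n..real (j+1) / n} f \<le> integral {real j / n..real (j+1) / n} (\<lambda>x. f (real j / n))"
    proof (rule integral_le)
      show "f integrable_on {real j / n..real (j+1) / n}" using j by (intro ni) auto
      fix x assume x: "x \<in> {real j / n..real (j+1) / n}"
      have "0 < real j / n" using j n by simp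
      moreover have "real (j+1) / n \<le> 1" using j n by simp
      then have "x \<le> 1" using x by auto
      ultimately show "f x \<le> f (real j / n)" using x by (intro dec) auto
    qed (auto intro: integrable_const_ivl)
    also have "\<dots> = f (real j / n) / n" using j n by (simp add: field_simps)
    finally show ?thesis .
  qed
  have "(\<Sum>j=a..n-1. f (real j / n)) / n = (\<Sum>j=a..n-1. f (real j / n) / n)"
    by (simp add: sum_divide_distrib)
  also have "\<dots> \<le> (\<Sum>j=a..n-1. integral {real (j-1) / n..real (j-1+1) / n} f)"
    using a by (intro sum_mono up) auto
  also have "\<dots> = (\<Sum>i\<in>{a-1..<n-1}. integral {real i / n..real (i+1) / n} f)"
  proof -
    have "(\<lambda>j. j - 1) ` {a..n-1} = {a-1..<n-1}" using a
      by (auto simp: image_iff intro!: bexI[where x="Suc _"])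
    moreover have "inj_on (\<lambda>j. j - 1) {a..n-1}" using a by (auto simp: inj_on_def)
    ultimately show ?thesis by (simp add: sum.reindex_cong[where l="\<lambda>j. j - 1"])
  qed
  also have "\<dots> = integral {real (a-1) / n..real (n-1) / n} f"
    using a n by (intro integral_pieces[OF int]) auto
  also have "\<dots> \<le> integral {0..1} f"
  proof (rule integral_subset_le)
    show "{real (a-1) / n..real (n-1) / n} \<subseteq> {0..1}" using n by (auto simp: field_simps)
    show "f integrable_on {real (a-1) / n..real (n-1) / n}" using n by (intro ni) (auto simp: field_simps)
  qed (use int nn in auto)
  finally show "(\<Sum>j=a..n-1. f (real j / n)) / n \<le> integral {0..1} f" .
  have "integral {real a / n..1} f = integral {real a / n..real n / n} f" using n by simp
  also have "\<dots> = (\<Sum>j\<in>{a..<n}. integral {real j / n..real (j+1) / n} f)"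
    using a n by (intro integral_pieces[OF int, symmetric]) auto
  also have "\<dots> \<le> (\<Sum>j\<in>{a..<n}. f (real j / n) / n)"
    using a by (intro sum_mono lo) auto
  also have "{a..<n} = {a..n-1}" using a by auto
  also have "(\<Sum>j=a..n-1. f (real j / n) / n) = (\<Sum>j=a..n-1. f (real j / n)) / n"
    by (simp add: sum_divide_distrib)
  finally show "integral {real a / n..1} f \<le> (\<Sum>j=a..n-1. f (real j / n)) / n" .
qed


lemma riemann_lim:
  fixes f :: "real \<Rightarrow> real" and a :: "nat \<Rightarrow> nat"
  assumes int: "f integrable_on {0..1}"
    and dec: "\<And>x y. 0 < x \<Longrightarrow> x \<le> y \<Longrightarrow> y \<le> 1 \<Longrightarrow> f y \<le> f x"
    and nn: "\<And>x. 0 \<le> x \<Longrightarrow> x \<le> 1 \<Longrightarrow> 0 \<le> f x"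
    and ev: "eventually (\<lambda>n. 2 \<le> a n \<and> a n \<le> n) sequentially"
    and lim: "(\<lambda>n. real (a n) / n) \<longlonglongrightarrow> 0"
  shows "(\<lambda>n. (\<Sum>j=a n..n-1. f (real j / n)) / n) \<longlonglongrightarrow> integral {0..1} f"
proof (rule real_tendsto_sandwich)
  define h where "h = (\<lambda>x. integral {0..x} f)"
  have "continuous_on {0..1} h" unfolding h_def by (rule indefinite_integral_continuous_1[OF int])
  then have c: "continuous (at 0 within {0..1}) h" by (simp add: continuous_on_eq_continuous_within)
  have inS: "eventually (\<lambda>n. real (a n) / n \<in> {0..1}) sequentially"
    using ev by eventually_elim auto
  have "(\<lambda>n. h (real (a n) / n)) \<longlonglongrightarrow> h 0"
    by (rule continuous_within_tendsto_compose[OF c inS lim])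
  then have h0: "(\<lambda>n. h (real (a n) / n)) \<longlonglongrightarrow> 0" unfolding h_def by simp
  show "(\<lambda>n. integral {0..1} f - h (real (a n) / n)) \<longlonglongrightarrow> integral {0..1} f"
    using tendsto_diff[OF tendsto_const h0] by simp
  show "\<forall>\<^sub>F n in sequentially. integral {0..1} f - h (real (a n) / n) \<le> (\<Sum>j=a n..n-1. f (real j / n)) / n"
    using ev
  proof eventually_elim
    case (elim n)
    have "integral {0..1} f - h (real (a n) / n) = integral {real (a n) / n..1} f"
      unfolding h_def using Henstock_Kurzweil_Integration.integral_combine[of 0 "real (a n) / n" 1 f] int elim by simp
    also have "\<dots> \<le> (\<Sum>j=a n..n-1. f (real j / n)) / n"
      using riemann_bounds(2)[OF int dec nn] elim by blast
    finally show ?case .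
  qed
  show "\<forall>\<^sub>F n in sequentially. (\<Sum>j=a n..n-1. f (real j / n)) / n \<le> integral {0..1} f"
    using ev
  proof eventually_elim
    case (elim n)
    then show ?case using riemann_bounds(1)[OF int dec nn] by blast
  qed
qed simp


lemma Gamma_reflection_real:
  fixes p :: real
  shows "Gamma p * Gamma (1 - p) = pi / sin (pi * p)"
proof -
  have "complex_of_real (Gamma p * Gamma (1 - p)) = Gamma (complex_of_real p) * Gamma (1 - complex_of_real p)"
    by (simp add: Gamma_complex_of_real[symmetric])
  also have "\<dots> = complex_of_real pi / sin (complex_of_real pi * complex_of_real p)"
    by (rule Gamma_reflection_complex)
  also have "\<dots> = complex_of_real (pi / sin (pi * p))"
    by (simp add: sin_of_real[symmetric])
  finally show ?thesis by (simp only: of_real_eq_iff)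
qed

lemma Beta_val:
  fixes p :: real assumes "0 < p" "p < 1"
  shows "Beta (1 - p) (1 + p) = p * pi / sin (pi * p)"
proof -
  have g2: "Gamma (2::real) = 1"
    using Gamma_plus1[of "1::real"] by simp
  have g1p: "Gamma (1 + p) = p * Gamma p"
    using Gamma_plus1[of p] assms nonpos_Ints_nonpos[of p] by (metis add.commute not_le)
  have "Beta (1 - p) (1 + p) = Gamma (1 - p) * Gamma (1 + p) / Gamma 2"
    unfolding Beta_def by simp
  also have "\<dots> = p * (Gamma p * Gamma (1 - p))" using g2 g1p by simp
  also have "\<dots> = p * pi / sin (pi * p)" by (simp add: Gamma_reflection_real)
  finally show ?thesis .
qed

definition fB :: "real \<Rightarrow> real \<Rightarrow> real" where "fB p x = x powr (- p) * (1 - x) powr p"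

lemma fB_int:
  fixes p :: real assumes "0 < p" "p < 1"
  shows "(fB p has_integral (p * pi / sin (pi * p))) {0..1}"
proof -
  have "((\<lambda>t. t powr ((1 - p) - 1) * (1 - t) powr ((1 + p) - 1)) has_integral Beta (1 - p) (1 + p)) {0..1}"
    using assms by (intro has_integral_Beta_real) auto
  then show ?thesis using Beta_val[OF assms] unfolding fB_def by simp
qed

lemma fB_nn: "0 \<le> fB p x" unfolding fB_def by simp

lemma fB_dec:
  fixes p :: real assumes "0 < p" "p < 1" "0 < x" "x \<le> y" "y \<le> 1"
  shows "fB p y \<le> fB p x"
  unfolding fB_def
proof (rule mult_mono)
  show "y powr - p \<le> x powr - p" using assms by (intro powr_mono2') auto
  show "(1 - y) powr p \<le> (1 - x) powr p" using assms by (intro powr_mono2) auto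
qed auto


lemma (in prob_space) sq_sum_indep:
  fixes Y :: "'i \<Rightarrow> 'a \<Rightarrow> real"
  assumes "finite I" "indep_vars (\<lambda>_. borel) Y I"
    and "\<And>i. i \<in> I \<Longrightarrow> integrable M (Y i)"
    and "\<And>i. i \<in> I \<Longrightarrow> integrable M (\<lambda>\<omega>. (Y i \<omega>)\<^sup>2)"
    and "\<And>i. i \<in> I \<Longrightarrow> expectation (Y i) = 0"
  shows "integrable M (\<lambda>\<omega>. (\<Sum>i\<in>I. Y i \<omega>)\<^sup>2) \<and>
         expectation (\<lambda>\<omega>. (\<Sum>i\<in>I. Y i \<omega>)\<^sup>2) = (\<Sum>i\<in>I. expectation (\<lambda>\<omega>. (Y i \<omega>)\<^sup>2))"
  using assms
proof (induction I rule: finite_induct)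
  case empty then show ?case by simp
next
  case (insert a I)
  have indI: "indep_vars (\<lambda>_. borel) Y I" using insert.prems(1) by (rule indep_vars_subset) auto
  note IH = insert.IH[OF indI insert.prems(2-4)]
  have prod: "integrable M (\<lambda>\<omega>. Y i \<omega> * Y a \<omega>) \<and> expectation (\<lambda>\<omega>. Y i \<omega> * Y a \<omega>) = 0"
    if i: "i \<in> I" for i
  proof -
    have ia: "i \<noteq> a" using i insert.hyps by auto
    have ind2: "indep_vars (\<lambda>_. borel) Y {i, a}" by (rule indep_vars_subset[OF insert.prems(1)]) (use i in auto)
    have int2: "\<And>j. j \<in> {i, a} \<Longrightarrow> integrable M (Y j)" using insert.prems(2) i by auto
    have pr: "(\<Prod>j\<in>{i, a}. Y j \<omega>) = Y i \<omega> * Y a \<omega>" for \<omega> using ia by simp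
    have "integrable M (\<lambda>\<omega>. \<Prod>j\<in>{i, a}. Y j \<omega>)"
      by (rule indep_vars_integrable[OF _ ind2 int2]) auto
    moreover have "expectation (\<lambda>\<omega>. \<Prod>j\<in>{i, a}. Y j \<omega>) = (\<Prod>j\<in>{i, a}. expectation (Y j))"
      by (rule indep_vars_lebesgue_integral[OF _ ind2 int2]) auto
    ultimately show ?thesis using insert.prems(4) i ia by (simp add: pr)
  qed
  have intS: "integrable M (\<lambda>\<omega>. (\<Sum>i\<in>I. Y i \<omega> * Y a \<omega>))"
    using prod by (intro Bochner_Integration.integrable_sum) auto
  have eS: "expectation (\<lambda>\<omega>. (\<Sum>i\<in>I. Y i \<omega> * Y a \<omega>)) = 0"
    using prod by (subst Bochner_Integration.integral_sum) auto
  have eq: "(\<Sum>i\<in>insert a I. Y i \<omega>)\<^sup>2 = (\<Sum>i\<in>I. Y i \<omega>)\<^sup>2 + 2 * (\<Sum>i\<in>I. Y i \<omega> * Y a \<omega>) + (Y a \<omega>)\<^sup>2" for \<omega>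
    using insert.hyps by (simp add: power2_sum sum_distrib_right sum_distrib_left algebra_simps)
  have ia: "integrable M (\<lambda>\<omega>. (Y a \<omega>)\<^sup>2)" using insert.prems(3) by simp
  have "integrable M (\<lambda>\<omega>. (\<Sum>i\<in>I. Y i \<omega>)\<^sup>2 + 2 * (\<Sum>i\<in>I. Y i \<omega> * Y a \<omega>) + (Y a \<omega>)\<^sup>2)"
    using IH intS ia by auto
  moreover have "expectation (\<lambda>\<omega>. (\<Sum>i\<in>I. Y i \<omega>)\<^sup>2 + 2 * (\<Sum>i\<in>I. Y i \<omega> * Y a \<omega>) + (Y a \<omega>)\<^sup>2)
      = (\<Sum>i\<in>I. expectation (\<lambda>\<omega>. (Y i \<omega>)\<^sup>2)) + expectation (\<lambda>\<omega>. (Y a \<omega>)\<^sup>2)"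
    using IH intS ia eS by simp
  ultimately show ?case unfolding eq using insert.hyps by (simp add: add.commute)
qed


lemma choose2_real:
  assumes "2 \<le> k" shows "real (k choose 2) = real k * (real k - 1) / 2"
proof -
  have ev: "even (k * (k - 1))" using assms by (cases "even k") (auto simp: even_mult_iff)
  have "real (k choose 2) = real (k * (k - 1) div 2)" by (simp add: choose_two)
  also have "\<dots> = real (k * (k - 1)) / 2" using ev by (simp add: real_of_nat_div)
  also have "\<dots> = real k * (real k - 1) / 2" using assms by (simp add: of_nat_diff)
  finally show ?thesis .
qed

lemma telescope:
  assumes "1 \<le> j" "j \<le> n"
  shows "(\<Sum>i=j+1..n. 2 / (real i * (real i - 1))) = 2 / j - 2 / n"
  using assms(2)
proof (induction n rule: dec_induct)
  case base then show ?case by simp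
next
  case (step k)
  have "(\<Sum>i=j+1..Suc k. 2 / (real i * (real i - 1))) = (\<Sum>i=j+1..k. 2 / (real i * (real i - 1))) + 2 / (real (Suc k) * real k)"
    using step.hyps by simp
  also have "\<dots> = (2 / j - 2 / k) + 2 / (real (Suc k) * real k)" using step.IH by simp
  also have "2 / (real (Suc k) * real k) = 2 / k - 2 / Suc k" using step.hyps assms(1) by (simp add: field_simps)
  also have "(2 / j - 2 / k) + (2 / k - 2 / Suc k) = 2 / j - 2 / Suc k" by simp
  finally show ?case .
qed

lemma var_bound:
  assumes "1 \<le> j" "j \<le> n"
  shows "(\<Sum>i=j+1..n. (2 / (real i * (real i - 1)))\<^sup>2) \<le> 4 / real j ^ 3"
proof -
  have b: "2 / (real i * (real i - 1)) \<le> 2 / (real j)\<^sup>2" if "i \<in> {j+1..n}" for i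
  proof -
    have "real j \<le> real i - 1" using that by auto
    moreover have "real j \<le> real i" using that by auto
    ultimately have "(real j)\<^sup>2 \<le> real i * (real i - 1)" using assms
      by (simp add: power2_eq_square mult_mono)
    moreover have "0 < (real j)\<^sup>2" using assms by simp
    moreover have "0 < real i * (real i - 1)" using that assms by auto
    ultimately show ?thesis by (intro divide_left_mono) auto
  qed
  have "(\<Sum>i=j+1..n. (2 / (real i * (real i - 1)))\<^sup>2) \<le> (\<Sum>i=j+1..n. 2 / (real j)\<^sup>2 * (2 / (real i * (real i - 1))))"
  proof (intro sum_mono)
    fix i assume i: "i \<in> {j+1..n}"
    have "0 \<le> 2 / (real i * (real i - 1))" using i by auto
    then show "(2 / (real i * (real i - 1)))\<^sup>2 \<le> 2 / (real j)\<^sup>2 * (2 / (real i * (real i - 1)))"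
      unfolding power2_eq_square using b[OF i, unfolded power2_eq_square] by (intro mult_right_mono) auto
  qed
  also have "\<dots> = 2 / (real j)\<^sup>2 * (\<Sum>i=j+1..n. 2 / (real i * (real i - 1)))"
    by (rule sum_distrib_left[symmetric])
  also have "\<dots> = 2 / (real j)\<^sup>2 * (2 / j - 2 / n)" by (simp only: telescope[OF assms])
  also have "\<dots> \<le> 2 / (real j)\<^sup>2 * (2 / j)" using assms by (intro mult_left_mono) auto
  also have "\<dots> = 4 / real j ^ 3" using assms by (simp add: field_simps power2_eq_square power3_eq_cube)
  finally show ?thesis .
qed


lemma block_pairs_fin: "finite (block_pairs k)"
proof -
  have "block_pairs k \<subseteq> {..<k} \<times> {..<k}" by (auto simp: block_pairs_def)
  then show ?thesis by (rule finite_subset) auto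
qed

lemma block_pairs_card: "2 \<le> k \<Longrightarrow> card (block_pairs k) > 0"
proof -
  assume k: "2 \<le> k"
  have "(0, 1) \<in> block_pairs k" using k by (simp add: block_pairs_def)
  then show ?thesis using block_pairs_fin[of k] by (subst card_gt_0_iff) auto
qed

context prob_space
begin

lemma good_AE:
  fixes E :: "nat \<Rightarrow> 'a \<Rightarrow> real" and V :: "nat \<Rightarrow> 'a \<Rightarrow> nat \<times> nat"
  assumes dist: "\<forall>k\<in>{2..n}. distributed M lborel (E k) (\<lambda>x. ennreal (exponential_density (real (k choose 2)) x))"
    and Vh: "\<forall>k\<in>{2..n}. V k \<in> measurable M (count_space UNIV) \<and>
              (\<forall>p\<in>block_pairs k. prob {\<omega> \<in> space M. V k \<omega> = p} = 1 / real (card (block_pairs k)))"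
  shows "AE \<omega> in M. \<forall>k\<in>{2..n}. E k \<omega> > 0 \<and> V k \<omega> \<in> block_pairs k"
proof (rule AE_finite_allI)
  fix k assume k: "k \<in> {2..n}"
  have lpos: "0 < real (k choose 2)" using k by simp
  have D: "distributed M lborel (E k) (exponential_density (real (k choose 2)))" using dist k by simp
  have Em: "E k \<in> borel_measurable M" using distributed_measurable[OF D] by simp
  have "\<P>(x in M. E k x \<le> 0) = 1 - exp (- 0 * real (k choose 2))"
    by (rule exponential_distributedD_le[OF D _ lpos]) simp
  then have p0: "prob {x \<in> space M. E k x \<le> 0} = 0" by simp
  have Ns: "{x \<in> space M. E k x \<le> 0} \<in> sets M" using Em by measurable
  have N: "{x \<in> space M. E k x \<le> 0} \<in> null_sets M"
    using p0 Ns by (simp add: emeasure_eq_measure null_sets_def)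
  have AE1: "AE \<omega> in M. E k \<omega> > 0"
    by (rule AE_I'[OF N]) auto
  have Vm: "V k \<in> measurable M (count_space UNIV)" using Vh k by blast
  interpret DV: prob_space "distr M (count_space UNIV) (V k)" by (rule prob_space_distr[OF Vm])
  have "measure (distr M (count_space UNIV) (V k)) (block_pairs k)
        = (\<Sum>p\<in>block_pairs k. measure (distr M (count_space UNIV) (V k)) {p})"
    by (rule DV.finite_measure_eq_sum_singleton[OF block_pairs_fin]) simp
  also have "\<dots> = (\<Sum>p\<in>block_pairs k. prob {\<omega> \<in> space M. V k \<omega> = p})"
  proof (rule sum.cong)
    fix p assume "p \<in> block_pairs k"
    have "V k -` {p} \<inter> space M = {\<omega> \<in> space M. V k \<omega> = p}" by auto
    then show "measure (distr M (count_space UNIV) (V k)) {p} = prob {\<omega> \<in> space M. V k \<omega> = p}"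
      using measure_distr[OF Vm, of "{p}"] by simp
  qed simp
  also have "\<dots> = (\<Sum>p\<in>block_pairs k. 1 / real (card (block_pairs k)))"
    using Vh k by (intro sum.cong) auto
  also have "\<dots> = 1" using block_pairs_card[of k] k by simp
  finally have "measure (distr M (count_space UNIV) (V k)) (block_pairs k) = 1" .
  then have "prob (V k -` block_pairs k \<inter> space M) = 1"
    using measure_distr[OF Vm, of "block_pairs k"] by simp
  then have "AE \<omega> in M. \<omega> \<in> V k -` block_pairs k \<inter> space M" by (rule AE_prob_1)
  then have AE2: "AE \<omega> in M. V k \<omega> \<in> block_pairs k" by eventually_elim auto
  show "AE \<omega> in M. E k \<omega> > 0 \<and> V k \<omega> \<in> block_pairs k" using AE1 AE2 by eventually_elim auto
qed simp


lemma second_moment: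
  fixes E :: "nat \<Rightarrow> 'a \<Rightarrow> real" and V :: "nat \<Rightarrow> 'a \<Rightarrow> nat \<times> nat"
  assumes dist: "\<forall>k\<in>{2..n}. distributed M lborel (E k) (\<lambda>x. ennreal (exponential_density (real (k choose 2)) x))"
    and ind: "indep_vars (\<lambda>_. borel \<Otimes>\<^sub>M count_space UNIV)
              (\<lambda>i \<omega>. case i of Inl k \<Rightarrow> (E k \<omega>, (0, 0)) | Inr k \<Rightarrow> (0, V k \<omega>))
              (Inl ` {2..n} \<union> Inr ` {2..n})"
    and j: "1 \<le> j" "j \<le> n"
  shows "integrable M (\<lambda>\<omega>. ((\<Sum>i=j+1..n. E i \<omega>) - (2 / j - 2 / n))\<^sup>2)"
    and "expectation (\<lambda>\<omega>. ((\<Sum>i=j+1..n. E i \<omega>) - (2 / j - 2 / n))\<^sup>2) \<le> 4 / real j ^ 3"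
proof -
  define c where "c = (\<lambda>k::nat. 2 / (real k * (real k - 1)))"
  define Y where "Y = (\<lambda>k \<omega>. E k \<omega> - c k)"
  define A where "A = {j+1..n}"
  have A2: "A \<subseteq> {2..n}" using j by (auto simp: A_def)
  have t: "(\<Sum>k\<in>A. c k) = 2 / j - 2 / n" unfolding A_def c_def by (rule telescope[OF j])
  have eqS: "(\<Sum>i=j+1..n. E i \<omega>) - (2 / j - 2 / n) = (\<Sum>k\<in>A. Y k \<omega>)" for \<omega>
  proof -
    have "(\<Sum>k\<in>A. Y k \<omega>) = (\<Sum>k\<in>A. E k \<omega>) - (\<Sum>k\<in>A. c k)" unfolding Y_def by (rule sum_subtractf)
    then show ?thesis unfolding t by (simp add: A_def)
  qed
  have props: "integrable M (Y k) \<and> integrable M (\<lambda>\<omega>. (Y k \<omega>)\<^sup>2) \<and> expectation (Y k) = 0 \<and>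
      expectation (\<lambda>\<omega>. (Y k \<omega>)\<^sup>2) = (c k)\<^sup>2" if k: "k \<in> {2..n}" for k
  proof -
    define l where "l = real (k choose 2)"
    have lpos: "0 < l" using k by (simp add: l_def)
    have cl: "c k = 1 / l" using k by (simp add: c_def l_def choose2_real)
    have D: "distributed M lborel (E k) (erlang_density 0 l)" using dist k by (simp add: l_def)
    have i1: "integrable M (E k)" using erlang_ith_moment_integrable[OF lpos D, of 1] by simp
    have i2: "integrable M (\<lambda>x. (E k x)\<^sup>2)" using erlang_ith_moment_integrable[OF lpos D, of 2] by simp
    have ex: "expectation (E k) = c k" using exponential_distributed_expectation[OF lpos D] cl by simp
    have va: "variance (E k) = 1 / l\<^sup>2" using exponential_distributed_variance[OF lpos D] .
    have iY: "integrable M (Y k)" unfolding Y_def using i1 by simp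
    have sq: "(Y k \<omega>)\<^sup>2 = (E k \<omega>)\<^sup>2 - 2 * c k * E k \<omega> + (c k)\<^sup>2" for \<omega>
      unfolding Y_def by (simp add: power2_diff)
    have iY2: "integrable M (\<lambda>\<omega>. (Y k \<omega>)\<^sup>2)" unfolding sq using i1 i2 by simp
    have eY: "expectation (Y k) = 0" unfolding Y_def using i1 ex by (simp add: prob_space)
    have eY2: "expectation (\<lambda>\<omega>. (Y k \<omega>)\<^sup>2) = (c k)\<^sup>2"
      using va ex cl unfolding Y_def by (simp add: power_divide)
    show ?thesis using iY iY2 eY eY2 by simp
  qed
  have ind1: "indep_vars (\<lambda>_. borel \<Otimes>\<^sub>M count_space UNIV)
              (\<lambda>i \<omega>. case i of Inl k \<Rightarrow> (E k \<omega>, (0, 0)) | Inr k \<Rightarrow> (0, V k \<omega>)) (Inl ` A)"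
    by (rule indep_vars_subset[OF ind]) (use A2 in auto)
  have ind2: "indep_vars (\<lambda>_. borel) (\<lambda>i \<omega>. (\<lambda>z. fst z - c (projl i))
       ((case i of Inl k \<Rightarrow> (E k \<omega>, (0, 0)) | Inr k \<Rightarrow> (0, V k \<omega>)))) (Inl ` A)"
    by (rule indep_vars_compose2[OF ind1]) measurable
  have ind3: "indep_vars (\<lambda>_. borel) (\<lambda>i. Y (projl i)) (Inl ` A :: (nat + nat) set)"
  proof -
    have "indep_vars (\<lambda>_. borel) (\<lambda>i \<omega>. (\<lambda>z. fst z - c (projl i))
       ((case i of Inl k \<Rightarrow> (E k \<omega>, (0, 0)) | Inr k \<Rightarrow> (0, V k \<omega>)))) (Inl ` A)
       = indep_vars (\<lambda>_. borel) (\<lambda>i. Y (projl i)) (Inl ` A :: (nat + nat) set)"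
      by (rule indep_vars_cong) (auto simp: Y_def fun_eq_iff)
    then show ?thesis using ind2 by simp
  qed
  have "integrable M (\<lambda>\<omega>. (\<Sum>i\<in>(Inl ` A :: (nat + nat) set). Y (projl i) \<omega>)\<^sup>2) \<and>
         expectation (\<lambda>\<omega>. (\<Sum>i\<in>(Inl ` A :: (nat + nat) set). Y (projl i) \<omega>)\<^sup>2) = (\<Sum>i\<in>(Inl ` A :: (nat + nat) set). expectation (\<lambda>\<omega>. (Y (projl i) \<omega>)\<^sup>2))"
    by (rule sq_sum_indep[OF _ ind3]) (use props A2 in \<open>auto simp: A_def\<close>)
  moreover have "(\<Sum>i\<in>(Inl ` A :: (nat + nat) set). g (projl i)) = (\<Sum>k\<in>A. g k)" for g :: "nat \<Rightarrow> real"
    by (subst sum.reindex) (auto simp: inj_on_def)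
  ultimately have R: "integrable M (\<lambda>\<omega>. (\<Sum>k\<in>A. Y k \<omega>)\<^sup>2)"
      "expectation (\<lambda>\<omega>. (\<Sum>k\<in>A. Y k \<omega>)\<^sup>2) = (\<Sum>k\<in>A. expectation (\<lambda>\<omega>. (Y k \<omega>)\<^sup>2))"
  proof -
    assume r: "\<And>g :: nat \<Rightarrow> real. (\<Sum>i\<in>(Inl ` A :: (nat + nat) set). g (projl i)) = (\<Sum>k\<in>A. g k)"
      and h: "integrable M (\<lambda>\<omega>. (\<Sum>i\<in>(Inl ` A :: (nat + nat) set). Y (projl i) \<omega>)\<^sup>2) \<and>
         expectation (\<lambda>\<omega>. (\<Sum>i\<in>(Inl ` A :: (nat + nat) set). Y (projl i) \<omega>)\<^sup>2) = (\<Sum>i\<in>(Inl ` A :: (nat + nat) set). expectation (\<lambda>\<omega>. (Y (projl i) \<omega>)\<^sup>2))"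
    have r1: "(\<Sum>i\<in>(Inl ` A :: (nat + nat) set). Y (projl i) \<omega>) = (\<Sum>k\<in>A. Y k \<omega>)" for \<omega>
      using r[of "\<lambda>k. Y k \<omega>"] .
    have r2: "(\<Sum>i\<in>(Inl ` A :: (nat + nat) set). expectation (\<lambda>\<omega>. (Y (projl i) \<omega>)\<^sup>2)) = (\<Sum>k\<in>A. expectation (\<lambda>\<omega>. (Y k \<omega>)\<^sup>2))"
      using r[of "\<lambda>k. expectation (\<lambda>\<omega>. (Y k \<omega>)\<^sup>2)"] .
    show "integrable M (\<lambda>\<omega>. (\<Sum>k\<in>A. Y k \<omega>)\<^sup>2)"
      "expectation (\<lambda>\<omega>. (\<Sum>k\<in>A. Y k \<omega>)\<^sup>2) = (\<Sum>k\<in>A. expectation (\<lambda>\<omega>. (Y k \<omega>)\<^sup>2))"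
      using h unfolding r1 r2 by auto
  qed
  show "integrable M (\<lambda>\<omega>. ((\<Sum>i=j+1..n. E i \<omega>) - (2 / j - 2 / n))\<^sup>2)" unfolding eqS using R(1) .
  have "expectation (\<lambda>\<omega>. ((\<Sum>i=j+1..n. E i \<omega>) - (2 / j - 2 / n))\<^sup>2) = (\<Sum>k\<in>A. (c k)\<^sup>2)"
    unfolding eqS R(2) using props A2 by (intro sum.cong) auto
  also have "\<dots> \<le> 4 / real j ^ 3" unfolding A_def c_def by (rule var_bound[OF j])
  finally show "expectation (\<lambda>\<omega>. ((\<Sum>i=j+1..n. E i \<omega>) - (2 / j - 2 / n))\<^sup>2) \<le> 4 / real j ^ 3" .
qed

end


lemma sum_by_parts:
  fixes U :: "nat \<Rightarrow> real"
  assumes "2 \<le> m" "m \<le> n"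
  shows "(\<Sum>k=m..n. real k * (U (k-1) - U k)) = real m * U (m-1) - real n * U n + (\<Sum>j=m..n-1. U j)"
  using assms(2)
proof (induction n rule: dec_induct)
  case base
  have "{m..m-1} = {}" using assms by auto
  then show ?case by (simp add: algebra_simps)
next
  case (step k)
  have s1: "(\<Sum>k=m..Suc k. real k * (U (k-1) - U k)) = (\<Sum>k=m..k. real k * (U (k-1) - U k)) + real (Suc k) * (U k - U (Suc k))"
    using step.hyps by simp
  have k1: "Suc k - 1 = k" by simp
  have s2: "(\<Sum>j=m..k. U j) = (\<Sum>j=m..k-1. U j) + U k"
  proof -
    have "k = Suc (k - 1)" using step.hyps assms by simp
    then have "{m..k} = insert k {m..k-1}" using step.hyps by auto
    moreover have "k \<notin> {m..k-1}" using assms step.hyps by auto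
    ultimately show ?thesis by simp
  qed
  show ?case unfolding s1 step.IH k1 s2 by (simp add: algebra_simps)
qed

lemma powr_subadd:
  fixes a b p :: real
  assumes "0 \<le> a" "0 \<le> b" "0 < p" "p \<le> 1"
  shows "(a + b) powr p \<le> a powr p + b powr p"
proof (cases "a + b = 0")
  case True then show ?thesis using assms by simp
next
  case False
  then have s: "0 < a + b" using assms by simp
  have r: "r \<le> r powr p" if "0 \<le> r" "r \<le> 1" for r :: real
  proof (cases "r = 0")
    case True then show ?thesis by simp
  next
    case False
    then have "r powr 1 \<le> r powr p" using that assms by (intro powr_mono') auto
    then show ?thesis using False that by simp
  qed
  have "a powr p = (a + b) powr p * (a / (a + b)) powr p"
    using s assms by (simp add: powr_mult[symmetric])
  also have "\<dots> \<ge> (a + b) powr p * (a / (a + b))"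
    using s assms r[of "a / (a+b)"] by (intro mult_left_mono) auto
  finally have A: "(a + b) powr p * (a / (a + b)) \<le> a powr p" .
  have "b powr p = (a + b) powr p * (b / (a + b)) powr p"
    using s assms by (simp add: powr_mult[symmetric])
  also have "\<dots> \<ge> (a + b) powr p * (b / (a + b))"
    using s assms r[of "b / (a+b)"] by (intro mult_left_mono) auto
  finally have B: "(a + b) powr p * (b / (a + b)) \<le> b powr p" .
  have one: "a / (a + b) + b / (a + b) = 1" using s by (simp add: add_divide_distrib[symmetric])
  have "(a + b) powr p * (a / (a + b)) + (a + b) powr p * (b / (a + b)) = (a + b) powr p"
    by (metis distrib_left mult_1_right one)
  then have "(a + b) powr p = (a + b) powr p * (a / (a + b)) + (a + b) powr p * (b / (a + b))"
    using s by simp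
  then show ?thesis using A B by linarith
qed

lemma powr_holder:
  fixes x y p :: real
  assumes "0 \<le> x" "0 \<le> y" "0 < p" "p \<le> 1"
  shows "\<bar>x powr p - y powr p\<bar> \<le> \<bar>x - y\<bar> powr p"
proof (cases "y \<le> x")
  case True
  have "x powr p \<le> (x - y) powr p + y powr p" using powr_subadd[of "x - y" y p] True assms by simp
  moreover have "y powr p \<le> x powr p" using True assms by (intro powr_mono2) auto
  ultimately show ?thesis using True by simp
next
  case False
  have "y powr p \<le> (y - x) powr p + x powr p" using powr_subadd[of "y - x" x p] False assms by simp
  moreover have "x powr p \<le> y powr p" using False assms by (intro powr_mono2) auto
  ultimately show ?thesis using False by simp
qed

lemma pw_bound:
  fixes x p j :: real
  assumes "0 \<le> x" "0 < p" "p < 1" "1 \<le> j"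
  shows "x powr p \<le> j powr (- 3 * p / 2) + j powr (3 - 3 * p / 2) * x\<^sup>2"
proof -
  define t where "t = j powr (-3/2)"
  have t0: "0 < t" using assms by (simp add: t_def)
  have tp: "t powr p = j powr (- 3 * p / 2)" unfolding t_def using assms by (simp add: powr_powr)
  have e: "- 3 / 2 * (p - 2) = 3 - 3 * p / 2" by (simp add: field_simps)
  have tq: "t powr (p - 2) = j powr (3 - 3 * p / 2)" unfolding t_def powr_powr e by (rule refl)
  show ?thesis
  proof (cases "x \<le> t")
    case True
    then have "x powr p \<le> t powr p" using assms by (intro powr_mono2) auto
    moreover have "0 \<le> j powr (3 - 3 * p / 2) * x\<^sup>2" by simp
    ultimately show ?thesis using tp by linarith
  next
    case False
    then have x0: "0 < x" using t0 by simp
    have x2: "x\<^sup>2 = x powr 2" using x0 powr_realpow[of x 2] by simp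
    have "x powr p = x powr ((p - 2) + 2)" by simp
    also have "\<dots> = x powr (p - 2) * x powr 2" by (rule powr_add)
    finally have "x powr p = x powr (p - 2) * x\<^sup>2" unfolding x2 .
    also have "\<dots> \<le> t powr (p - 2) * x\<^sup>2"
      using False t0 assms by (intro mult_right_mono powr_mono2') auto
    finally show ?thesis using tq by (simp add: add_increasing)
  qed
qed


definition mm :: "nat \<Rightarrow> nat" where "mm n = nat \<lceil>real n powr (3/4)\<rceil> + 1"

lemma mm_ge2: "1 \<le> n \<Longrightarrow> 2 \<le> mm n"
proof -
  assume n: "1 \<le> n"
  have "0 < real n powr (3/4)" using n by simp
  then have "1 \<le> \<lceil>real n powr (3/4)\<rceil>" by (simp add: one_le_ceiling)
  then show ?thesis unfolding mm_def by linarith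
qed

lemma mm_lo: "real n powr (3/4) \<le> real (mm n - 1)"
proof -
  have "real n powr (3/4) \<le> real_of_int \<lceil>real n powr (3/4)\<rceil>" by (rule le_of_int_ceiling)
  also have "\<dots> = real (nat \<lceil>real n powr (3/4)\<rceil>)" by simp
  finally show ?thesis unfolding mm_def by simp
qed

lemma mm_hi: "real (mm n) \<le> real n powr (3/4) + 2"
proof -
  have "real_of_int \<lceil>real n powr (3/4)\<rceil> \<le> real n powr (3/4) + 1" using ceiling_correct[of "real n powr (3/4)"] by linarith
  moreover have "0 \<le> real n powr (3/4)" by simp
  then have "0 \<le> \<lceil>real n powr (3/4)\<rceil>" by (subst zero_le_ceiling) linarith
  then have "real (nat \<lceil>real n powr (3/4)\<rceil>) = real_of_int \<lceil>real n powr (3/4)\<rceil>" by simp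
  moreover have "real (mm n) = real (nat \<lceil>real n powr (3/4)\<rceil>) + 1" unfolding mm_def by simp
  ultimately show ?thesis by linarith
qed

lemma mm_ratio: "(\<lambda>n. real (mm n) / real n) \<longlonglongrightarrow> 0"
proof (rule real_tendsto_sandwich[where f="\<lambda>_. 0" and h="\<lambda>n. (real n powr (3/4) + 2) / real n"])
  show "(\<lambda>n. (real n powr (3/4) + 2) / real n) \<longlonglongrightarrow> 0" by real_asymp
  show "\<forall>\<^sub>F n in sequentially. 0 \<le> real (mm n) / real n" by simp
  show "\<forall>\<^sub>F n in sequentially. real (mm n) / real n \<le> (real n powr (3/4) + 2) / real n"
  proof (intro always_eventually allI)
    fix n
    show "real (mm n) / real n \<le> (real n powr (3/4) + 2) / real n"
      using mm_hi[of n] by (intro divide_right_mono) auto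
  qed
qed simp

lemma mm_le: "eventually (\<lambda>n. 1 \<le> n \<and> 2 \<le> mm n \<and> mm n \<le> n) sequentially"
proof -
  have "eventually (\<lambda>n. real (mm n) / real n < 1) sequentially"
    using mm_ratio by (rule order_tendstoD) simp
  moreover have "eventually (\<lambda>n. 1 \<le> n) sequentially" by (rule eventually_ge_at_top)
  ultimately show ?thesis
  proof eventually_elim
    case (elim n)
    then have "real (mm n) < real n" by (simp add: field_simps)
    then show ?case using elim mm_ge2 by simp
  qed
qed

lemma mm_top: "filterlim (\<lambda>n. real (mm n)) at_top sequentially"
proof (rule filterlim_at_top_mono)
  show "filterlim (\<lambda>n::nat. real n powr (3/4)) at_top sequentially" by real_asymp
  show "\<forall>\<^sub>F n in sequentially. real n powr (3/4) \<le> real (mm n)"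
  proof (intro always_eventually allI)
    fix n
    have "real (mm n - 1) \<le> real (mm n)" by simp
    then show "real n powr (3/4) \<le> real (mm n)" using mm_lo[of n] by linarith
  qed
qed


definition uu :: "real \<Rightarrow> nat \<Rightarrow> nat \<Rightarrow> real" where
  "uu \<gamma> n j = psi \<gamma> (2 / real j - 2 / real n)"

lemma uu_fB:
  assumes g: "\<gamma> > 0" and p: "p = 1 / (\<gamma> + 1)" and j: "1 \<le> j" "j \<le> n"
  shows "uu \<gamma> n j = (2 * (\<gamma> + 1)) powr p * (real n powr (- p) * fB p (real j / real n))"
proof -
  have n: "0 < real n" using j by simp
  have jj: "0 < real j" using j by simp
  have jn: "real j \<le> real n" using j by simp
  have a: "(real j / real n) powr (- p) = (real n / real j) powr p"
    using n jj by (simp add: powr_minus_divide powr_divide)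
  have b: "(real n / real j) * (1 - real j / real n) = (real n - real j) / real j"
    using n jj by (simp add: field_simps)
  have f: "fB p (real j / real n) = ((real n - real j) / real j) powr p"
    unfolding fB_def a b[symmetric] using n jj jn by (subst powr_mult) (auto simp: field_simps)
  have c: "(\<gamma> + 1) * (2 / real j - 2 / real n) = (2 * (\<gamma> + 1)) * ((1 / real n) * ((real n - real j) / real j))"
    using n jj by (simp add: field_simps)
  have "uu \<gamma> n j = ((2 * (\<gamma> + 1)) * ((1 / real n) * ((real n - real j) / real j))) powr p"
    unfolding uu_def psi_def c p ..
  also have "\<dots> = (2 * (\<gamma> + 1)) powr p * ((1 / real n) powr p * ((real n - real j) / real j) powr p)"
  proof -
    have nn1: "0 \<le> 2 * (\<gamma> + 1)" using g by simp
    have nn2: "0 \<le> 1 / real n" by simp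
    have nn3: "0 \<le> (real n - real j) / real j" using jn jj by simp
    show ?thesis using nn1 nn2 nn3 by (simp only: powr_mult)
  qed
  also have "(1 / real n) powr p = real n powr (- p)" using n by (simp add: powr_minus_divide powr_divide)
  finally show ?thesis unfolding f .
qed


lemma p_bounds: "(\<gamma>::real) > 0 \<Longrightarrow> p = 1 / (\<gamma> + 1) \<Longrightarrow> 0 < p \<and> p < 1"
proof -
  assume g: "\<gamma> > 0" and p: "p = 1 / (\<gamma> + 1)"
  have "0 < 1 / (\<gamma> + 1)" using g by simp
  moreover have "1 / (\<gamma> + 1) < 1" using g by (simp add: divide_less_eq)
  ultimately show ?thesis using p by simp
qed

lemma dn_lim:
  assumes g: "\<gamma> > 0" and p: "p = 1 / (\<gamma> + 1)"
  shows "(\<lambda>n. (\<Sum>j=mm n..n-1. uu \<gamma> n j) / real n powr (1 - p)) \<longlonglongrightarrow> (2 * (\<gamma> + 1)) powr p * (p * pi / sin (pi * p))"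
proof -
  have p01: "0 < p" "p < 1" using p_bounds[OF g p] by auto
  have int: "fB p integrable_on {0..1}" using fB_int[OF p01] by (rule has_integral_integrable)
  have ival: "integral {0..1} (fB p) = p * pi / sin (pi * p)" using fB_int[OF p01] by (rule integral_unique)
  have ev: "eventually (\<lambda>n. 2 \<le> mm n \<and> mm n \<le> n) sequentially"
    using mm_le by eventually_elim auto
  have R: "(\<lambda>n. (\<Sum>j=mm n..n-1. fB p (real j / n)) / n) \<longlonglongrightarrow> p * pi / sin (pi * p)"
    using riemann_lim[OF int fB_dec[OF p01] fB_nn ev mm_ratio] unfolding ival .
  have R2: "(\<lambda>n. (2 * (\<gamma> + 1)) powr p * ((\<Sum>j=mm n..n-1. fB p (real j / n)) / n))
      \<longlonglongrightarrow> (2 * (\<gamma> + 1)) powr p * (p * pi / sin (pi * p))"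
    by (rule tendsto_mult_left[OF R])
  have E: "eventually (\<lambda>n. (2 * (\<gamma> + 1)) powr p * ((\<Sum>j=mm n..n-1. fB p (real j / n)) / n) =
       (\<Sum>j=mm n..n-1. uu \<gamma> n j) / real n powr (1 - p)) sequentially"
    using mm_le
  proof eventually_elim
    case (elim n)
    have n0: "0 < real n" using elim by simp
    have "(\<Sum>j=mm n..n-1. uu \<gamma> n j) = (\<Sum>j=mm n..n-1. (2 * (\<gamma> + 1)) powr p * (real n powr (- p) * fB p (real j / real n)))"
      using elim by (intro sum.cong refl uu_fB[OF g p]) auto
    also have "\<dots> = (2 * (\<gamma> + 1)) powr p * real n powr (- p) * (\<Sum>j=mm n..n-1. fB p (real j / real n))"
      by (simp add: sum_distrib_left mult.assoc)
    finally have s: "(\<Sum>j=mm n..n-1. uu \<gamma> n j) = (2 * (\<gamma> + 1)) powr p * real n powr (- p) * (\<Sum>j=mm n..n-1. fB p (real j / real n))" .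
    have q: "real n powr (- p) / real n powr (1 - p) = 1 / real n"
    proof -
      have "real n powr (- p) / real n powr (1 - p) = real n powr (- p - (1 - p))"
        by (rule powr_diff[symmetric])
      also have "- p - (1 - p) = - 1" by simp
      also have "real n powr (- 1) = 1 / real n" using n0 by (simp add: powr_minus_divide)
      finally show ?thesis .
    qed
    have "(\<Sum>j=mm n..n-1. uu \<gamma> n j) / real n powr (1 - p)
          = (2 * (\<gamma> + 1)) powr p * (real n powr (- p) / real n powr (1 - p)) * (\<Sum>j=mm n..n-1. fB p (real j / real n))"
      unfolding s by simp
    also have "\<dots> = (2 * (\<gamma> + 1)) powr p * ((\<Sum>j=mm n..n-1. fB p (real j / n)) / n)"
      unfolding q by simp
    finally show ?case by simp
  qed
  show ?thesis using R2 E by (rule Lim_transform_eventually)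
qed


definition GG :: "real \<Rightarrow> nat \<Rightarrow> real" where
  "GG p n = real (mm n) * real (mm n - 1) powr (- 3 * p / 2) + (\<Sum>j=mm n..n-1. real j powr (- 3 * p / 2))"

lemma GG_bound:
  assumes p01: "0 < p" "p < 1" and n: "1 \<le> n" "2 \<le> mm n" "mm n \<le> n"
  shows "GG p n / real n powr (1 - p) \<le> 2 * (real (mm n - 1) / real n) powr (1 - p)
            + real (mm n) powr (- p / 2) * integral {0..1} (\<lambda>x. x powr (- p))"
proof -
  define m where "m = mm n"
  have m1: "1 \<le> real (m - 1)" using n by (simp add: m_def)
  have mle: "real m \<le> 2 * real (m - 1)" using n by (simp add: m_def of_nat_diff)
  have n0: "0 < real n" using n by simp
  have b1: "real m * real (m - 1) powr (- 3 * p / 2) \<le> 2 * real (m - 1) powr (1 - p)"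
  proof -
    have "real (m - 1) powr (- 3 * p / 2) \<le> real (m - 1) powr (- p)"
      using m1 p01 by (intro powr_mono) auto
    then have "real m * real (m - 1) powr (- 3 * p / 2) \<le> (2 * real (m - 1)) * real (m - 1) powr (- p)"
      using mle by (intro mult_mono) auto
    also have "\<dots> = 2 * (real (m - 1) powr 1 * real (m - 1) powr (- p))" using m1 by simp
    also have "\<dots> = 2 * real (m - 1) powr (1 - p)" using powr_add[of "real (m-1)" 1 "-p"] m1 by simp
    finally show ?thesis .
  qed
  define I0 where "I0 = integral {0..1} (\<lambda>x::real. x powr (- p))"
  have int0: "(\<lambda>x::real. x powr (- p)) integrable_on {0..1}"
    using p01 by (intro integrable_on_powr_from_0) auto
  have dec0: "y powr (- p) \<le> x powr (- p)" if "0 < x" "x \<le> y" "y \<le> 1" for x y :: real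
    using that p01 by (intro powr_mono2') auto
  have RB: "(\<Sum>j=m..n-1. (real j / n) powr (- p)) / n \<le> I0"
    unfolding I0_def using riemann_bounds(1)[OF int0 dec0, of m n] n by (simp add: m_def)
  have b3: "(\<Sum>j=m..n-1. real j powr (- 3 * p / 2)) \<le> real m powr (- p / 2) * (real n powr (1 - p) * I0)"
  proof -
    have "(\<Sum>j=m..n-1. real j powr (- 3 * p / 2)) \<le> (\<Sum>j=m..n-1. real m powr (- p / 2) * real j powr (- p))"
    proof (intro sum_mono)
      fix j assume j: "j \<in> {m..n-1}"
      have jpos: "0 < real j" using j n by (auto simp: m_def)
      have "real j powr (- 3 * p / 2) = real j powr (- p / 2) * real j powr (- p)"
        by (simp add: powr_add[symmetric])
      also have "\<dots> \<le> real m powr (- p / 2) * real j powr (- p)"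
        using j n p01 by (intro mult_right_mono powr_mono2') (auto simp: m_def)
      finally show "real j powr (- 3 * p / 2) \<le> real m powr (- p / 2) * real j powr (- p)" .
    qed
    also have "\<dots> = real m powr (- p / 2) * (\<Sum>j=m..n-1. real j powr (- p))"
      by (simp add: sum_distrib_left)
    also have "(\<Sum>j=m..n-1. real j powr (- p)) = real n powr (1 - p) * ((\<Sum>j=m..n-1. (real j / n) powr (- p)) / n)"
    proof -
      have "(\<Sum>j=m..n-1. real j powr (- p)) = (\<Sum>j=m..n-1. real n powr (- p) * (real j / n) powr (- p))"
        using n0 by (intro sum.cong refl) (simp add: powr_divide)
      also have "\<dots> = real n powr (- p) * (\<Sum>j=m..n-1. (real j / n) powr (- p))"
        by (simp add: sum_distrib_left)
      also have "real n powr (- p) = real n powr (1 - p) / real n"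
        using n0 by (simp add: powr_diff powr_minus_divide)
      finally show ?thesis by simp
    qed
    also have "real m powr (- p / 2) * (real n powr (1 - p) * ((\<Sum>j=m..n-1. (real j / n) powr (- p)) / n))
        \<le> real m powr (- p / 2) * (real n powr (1 - p) * I0)"
      using RB by (intro mult_left_mono) auto
    finally show ?thesis .
  qed
  have "GG p n \<le> 2 * real (m - 1) powr (1 - p) + real m powr (- p / 2) * (real n powr (1 - p) * I0)"
    unfolding GG_def m_def[symmetric] using b1 b3 by linarith
  then have "GG p n / real n powr (1 - p) \<le> (2 * real (m - 1) powr (1 - p) + real m powr (- p / 2) * (real n powr (1 - p) * I0)) / real n powr (1 - p)"
    using n0 by (intro divide_right_mono) auto
  also have "\<dots> = 2 * (real (m - 1) / real n) powr (1 - p) + real m powr (- p / 2) * I0"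
    using n0 by (simp add: field_simps powr_divide)
  finally show ?thesis unfolding m_def I0_def .
qed


lemma X_lim:
  assumes p01: "0 < p" "p < 1"
  shows "(\<lambda>n. 2 * (real (mm n - 1) / real n) powr (1 - p) + real (mm n) powr (- p / 2) * c) \<longlonglongrightarrow> 0"
proof -
  have r: "(\<lambda>n. real (mm n - 1) / real n) \<longlonglongrightarrow> 0"
  proof (rule real_tendsto_sandwich[where f="\<lambda>_. 0" and h="\<lambda>n. real (mm n) / real n"])
    show "\<forall>\<^sub>F n in sequentially. real (mm n - 1) / real n \<le> real (mm n) / real n"
      by (intro always_eventually allI divide_right_mono) auto
  qed (auto simp: mm_ratio)
  have a: "(\<lambda>n. (real (mm n - 1) / real n) powr (1 - p)) \<longlonglongrightarrow> 0"
    by (rule tendsto_zero_powrI[OF r tendsto_const]) (use p01 in auto)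
  have b: "(\<lambda>n. real (mm n) powr (- p / 2)) \<longlonglongrightarrow> 0"
    by (rule tendsto_neg_powr[OF _ mm_top]) (use p01 in auto)
  show ?thesis using tendsto_add[OF tendsto_mult_left[OF a, of 2] tendsto_mult_right[OF b, of c]] by simp
qed

lemma GG_nonneg: "0 \<le> GG p n"
  unfolding GG_def by (intro add_nonneg_nonneg sum_nonneg) auto

lemma GG_lim:
  assumes p01: "0 < p" "p < 1"
  shows "(\<lambda>n. GG p n / real n powr (1 - p)) \<longlonglongrightarrow> 0"
proof (rule real_tendsto_sandwich[where f="\<lambda>_. 0" and
      h="\<lambda>n. 2 * (real (mm n - 1) / real n) powr (1 - p) + real (mm n) powr (- p / 2) * integral {0..1} (\<lambda>x. x powr (- p))"])
  show "\<forall>\<^sub>F n in sequentially. 0 \<le> GG p n / real n powr (1 - p)" using GG_nonneg by simp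
  show "\<forall>\<^sub>F n in sequentially. GG p n / real n powr (1 - p) \<le> 2 * (real (mm n - 1) / real n) powr (1 - p) + real (mm n) powr (- p / 2) * integral {0..1} (\<lambda>x. x powr (- p))"
    using mm_le by eventually_elim (use GG_bound[OF p01] in auto)
  show "(\<lambda>n. 2 * (real (mm n - 1) / real n) powr (1 - p) + real (mm n) powr (- p / 2) * integral {0..1} (\<lambda>x. x powr (- p))) \<longlonglongrightarrow> 0"
    by (rule X_lim[OF p01])
qed simp

lemma uu_m_bound:
  assumes g: "\<gamma> > 0" and p: "p = 1 / (\<gamma> + 1)" and n: "1 \<le> n" "2 \<le> mm n" "mm n \<le> n"
  shows "real (mm n) * uu \<gamma> n (mm n - 1) / real n powr (1 - p) \<le> (2 * (\<gamma> + 1)) powr p * (2 * (real (mm n - 1) / real n) powr (1 - p))"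
proof -
  define m where "m = mm n"
  have m1: "1 \<le> real (m - 1)" using n by (simp add: m_def)
  have mle: "real m \<le> 2 * real (m - 1)" using n by (simp add: m_def of_nat_diff)
  have n0: "0 < real n" using n by simp
  have p0: "0 < p" using p_bounds[OF g p] by simp
  have "uu \<gamma> n (m - 1) = ((\<gamma> + 1) * (2 / real (m - 1) - 2 / real n)) powr p"
    unfolding uu_def psi_def p ..
  also have "\<dots> \<le> ((\<gamma> + 1) * (2 / real (m - 1))) powr p"
  proof (rule powr_mono2)
    have "2 / real n \<le> 2 / real (m - 1)" using m1 n by (intro divide_left_mono) (auto simp: m_def)
    then show "0 \<le> (\<gamma> + 1) * (2 / real (m - 1) - 2 / real n)" using g by simp
    show "(\<gamma> + 1) * (2 / real (m - 1) - 2 / real n) \<le> (\<gamma> + 1) * (2 / real (m - 1))"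
      using g by (intro mult_left_mono) auto
  qed (use p0 in auto)
  also have "\<dots> = (2 * (\<gamma> + 1)) powr p * real (m - 1) powr (- p)"
    using m1 g by (simp add: powr_mult powr_divide powr_minus_divide field_simps)
  finally have u: "uu \<gamma> n (m - 1) \<le> (2 * (\<gamma> + 1)) powr p * real (m - 1) powr (- p)" .
  have "real m * uu \<gamma> n (m - 1) \<le> (2 * real (m - 1)) * ((2 * (\<gamma> + 1)) powr p * real (m - 1) powr (- p))"
    using u mle by (intro mult_mono) (auto simp: uu_def psi_def)
  also have "\<dots> = (2 * (\<gamma> + 1)) powr p * (2 * (real (m - 1) powr 1 * real (m - 1) powr (- p)))"
    using m1 by simp
  also have "\<dots> = (2 * (\<gamma> + 1)) powr p * (2 * real (m - 1) powr (1 - p))"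
    using powr_add[of "real (m-1)" 1 "-p"] m1 by simp
  finally have "real m * uu \<gamma> n (m - 1) / real n powr (1 - p) \<le> (2 * (\<gamma> + 1)) powr p * (2 * real (m - 1) powr (1 - p)) / real n powr (1 - p)"
    using n0 by (intro divide_right_mono) auto
  also have "\<dots> = (2 * (\<gamma> + 1)) powr p * (2 * (real (m - 1) / real n) powr (1 - p))"
    using n0 by (simp add: powr_divide)
  finally show ?thesis unfolding m_def .
qed

definition An :: "real \<Rightarrow> real \<Rightarrow> nat \<Rightarrow> real" where
  "An \<gamma> p n = (real (mm n) * uu \<gamma> n (mm n - 1) + (\<gamma> + 1) powr p * GG p n) / real n powr (1 - p)"

lemma An_lim:
  assumes g: "\<gamma> > 0" and p: "p = 1 / (\<gamma> + 1)"
  shows "(\<lambda>n. An \<gamma> p n) \<longlonglongrightarrow> 0"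
proof -
  have p01: "0 < p" "p < 1" using p_bounds[OF g p] by auto
  define K where "K = (2 * (\<gamma> + 1)) powr p"
  have a: "(\<lambda>n. real (mm n) * uu \<gamma> n (mm n - 1) / real n powr (1 - p)) \<longlonglongrightarrow> 0"
  proof (rule real_tendsto_sandwich[where f="\<lambda>_. 0" and h="\<lambda>n. K * (2 * (real (mm n - 1) / real n) powr (1 - p) + real (mm n) powr (- p / 2) * 0)"])
    show "\<forall>\<^sub>F n in sequentially. 0 \<le> real (mm n) * uu \<gamma> n (mm n - 1) / real n powr (1 - p)"
      by (simp add: uu_def psi_def)
    show "\<forall>\<^sub>F n in sequentially. real (mm n) * uu \<gamma> n (mm n - 1) / real n powr (1 - p)
        \<le> K * (2 * (real (mm n - 1) / real n) powr (1 - p) + real (mm n) powr (- p / 2) * 0)"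
      using mm_le by eventually_elim (use uu_m_bound[OF g p] in \<open>auto simp: K_def\<close>)
    show "(\<lambda>n. K * (2 * (real (mm n - 1) / real n) powr (1 - p) + real (mm n) powr (- p / 2) * 0)) \<longlonglongrightarrow> 0"
      using tendsto_mult_left[OF X_lim[OF p01, of 0], of K] by simp
  qed simp
  have b: "(\<lambda>n. (\<gamma> + 1) powr p * (GG p n / real n powr (1 - p))) \<longlonglongrightarrow> 0"
    using tendsto_mult_left[OF GG_lim[OF p01], of "(\<gamma> + 1) powr p"] by simp
  have "(\<lambda>n. real (mm n) * uu \<gamma> n (mm n - 1) / real n powr (1 - p) + (\<gamma> + 1) powr p * (GG p n / real n powr (1 - p))) \<longlonglongrightarrow> 0"
    using tendsto_add[OF a b] by simp
  then show ?thesis unfolding An_def by (simp add: add_divide_distrib)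
qed


definition Wf :: "real \<Rightarrow> nat \<Rightarrow> (nat \<Rightarrow> real) \<Rightarrow> real" where
  "Wf p n e = real (mm n) * (real (mm n - 1) powr (3 - 3 * p / 2) *
       ((\<Sum>i=(mm n - 1)+1..n. e i) - (2 / real (mm n - 1) - 2 / real n))\<^sup>2) +
     (\<Sum>j=mm n..n-1. real j powr (3 - 3 * p / 2) * ((\<Sum>i=j+1..n. e i) - (2 / real j - 2 / real n))\<^sup>2)"

lemma psi_bound:
  assumes g: "\<gamma> > 0" and p: "p = 1 / (\<gamma> + 1)" and a: "0 \<le> a" and b: "0 \<le> b" and j: "1 \<le> j"
  shows "\<bar>psi \<gamma> a - psi \<gamma> b\<bar> \<le> (\<gamma> + 1) powr p * (j powr (- 3 * p / 2) + j powr (3 - 3 * p / 2) * (a - b)\<^sup>2)"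
proof -
  have p01: "0 < p" "p < 1" using p_bounds[OF g p] by auto
  have "\<bar>psi \<gamma> a - psi \<gamma> b\<bar> = \<bar>((\<gamma> + 1) * a) powr p - ((\<gamma> + 1) * b) powr p\<bar>"
    unfolding psi_def p ..
  also have "\<dots> \<le> \<bar>(\<gamma> + 1) * a - (\<gamma> + 1) * b\<bar> powr p"
    using g a b p01 by (intro powr_holder) auto
  also have "\<bar>(\<gamma> + 1) * a - (\<gamma> + 1) * b\<bar> = (\<gamma> + 1) * \<bar>a - b\<bar>"
    using g by (simp add: abs_mult right_diff_distrib[symmetric])
  also have "((\<gamma> + 1) * \<bar>a - b\<bar>) powr p = (\<gamma> + 1) powr p * \<bar>a - b\<bar> powr p"
    using g by (simp add: powr_mult)
  also have "\<dots> \<le> (\<gamma> + 1) powr p * (j powr (- 3 * p / 2) + j powr (3 - 3 * p / 2) * \<bar>a - b\<bar>\<^sup>2)"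
    using pw_bound[of "\<bar>a - b\<bar>" p j] p01 j by (intro mult_left_mono) auto
  finally show ?thesis by simp
qed

lemma pointwise_bound:
  fixes e U :: "nat \<Rightarrow> real"
  assumes g: "\<gamma> > 0" and p: "p = 1 / (\<gamma> + 1)"
    and n: "1 \<le> n" "2 \<le> mm n" "mm n \<le> n"
    and pos: "\<forall>i\<in>{2..n}. e i > 0"
    and U: "\<And>k. 1 \<le> k \<Longrightarrow> k \<le> n \<Longrightarrow> U k = psi \<gamma> (\<Sum>i=k+1..n. e i)"
  shows "\<bar>(\<Sum>k=mm n..n. real k * (U (k - 1) - U k)) / real n powr (1 - p) - cst\<bar>
     \<le> An \<gamma> p n + \<bar>(\<Sum>j=mm n..n-1. uu \<gamma> n j) / real n powr (1 - p) - cst\<bar>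
        + (\<gamma> + 1) powr p * Wf p n e / real n powr (1 - p)"
proof -
  define m where "m = mm n"
  define q where "q = (\<gamma> + 1) powr p"
  define N where "N = real n powr (1 - p)"
  have N0: "0 < N" unfolding N_def using n by simp
  have q0: "0 \<le> q" unfolding q_def by simp
  have Un: "U n = 0" using U[of n] n by (simp add: psi_def)
  define S where "S = (\<lambda>j. \<Sum>i=j+1..n. e i)"
  define mu where "mu = (\<lambda>j::nat. 2 / real j - 2 / real n)"
  have S0: "0 \<le> S j" if "1 \<le> j" for j
    unfolding S_def using pos that by (intro sum_nonneg) (auto intro: less_imp_le)
  have mu0: "0 \<le> mu j" if "1 \<le> j" "j \<le> n" for j
    unfolding mu_def using that by (auto intro!: divide_left_mono)
  have uu_eq: "uu \<gamma> n j = psi \<gamma> (mu j)" for j unfolding uu_def mu_def ..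
  have key: "\<bar>U j - uu \<gamma> n j\<bar> \<le> q * (real j powr (- 3 * p / 2) + real j powr (3 - 3 * p / 2) * (S j - mu j)\<^sup>2)"
    if j: "1 \<le> j" "j \<le> n" for j
  proof -
    have "U j = psi \<gamma> (S j)" using U[OF j] unfolding S_def .
    then show ?thesis unfolding q_def uu_eq using psi_bound[OF g p S0 mu0, of j j j] j by simp
  qed
  have sbp: "(\<Sum>k=m..n. real k * (U (k - 1) - U k)) = real m * U (m - 1) + (\<Sum>j=m..n-1. U j)"
    using sum_by_parts[of m n U] n Un by (simp add: m_def)
  have A1: "real m * U (m - 1) \<le> real m * uu \<gamma> n (m - 1) + real m * (q * (real (m - 1) powr (- 3 * p / 2) + real (m - 1) powr (3 - 3 * p / 2) * (S (m - 1) - mu (m - 1))\<^sup>2))"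
  proof -
    have "U (m - 1) \<le> uu \<gamma> n (m - 1) + q * (real (m - 1) powr (- 3 * p / 2) + real (m - 1) powr (3 - 3 * p / 2) * (S (m - 1) - mu (m - 1))\<^sup>2)"
    proof -
      have k1: "1 \<le> m - 1" "m - 1 \<le> n" using n by (auto simp: m_def)
      show ?thesis using abs_le_D1[OF key[OF k1]] by linarith
    qed
    then show ?thesis by (simp add: distrib_left[symmetric] mult_left_mono)
  qed
  have A2: "\<bar>(\<Sum>j=m..n-1. U j) - (\<Sum>j=m..n-1. uu \<gamma> n j)\<bar> \<le> (\<Sum>j=m..n-1. q * (real j powr (- 3 * p / 2) + real j powr (3 - 3 * p / 2) * (S j - mu j)\<^sup>2))"
  proof -
    have "\<bar>(\<Sum>j=m..n-1. U j) - (\<Sum>j=m..n-1. uu \<gamma> n j)\<bar> = \<bar>\<Sum>j=m..n-1. U j - uu \<gamma> n j\<bar>"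
      by (simp add: sum_subtractf)
    also have "\<dots> \<le> (\<Sum>j=m..n-1. \<bar>U j - uu \<gamma> n j\<bar>)" by (rule sum_abs)
    also have "\<dots> \<le> (\<Sum>j=m..n-1. q * (real j powr (- 3 * p / 2) + real j powr (3 - 3 * p / 2) * (S j - mu j)\<^sup>2))"
      using n by (intro sum_mono key) (auto simp: m_def)
    finally show ?thesis .
  qed
  have U0: "0 \<le> U (m - 1)" using U[of "m - 1"] n by (simp add: m_def psi_def)
  have GW: "real m * (q * (real (m - 1) powr (- 3 * p / 2) + real (m - 1) powr (3 - 3 * p / 2) * (S (m - 1) - mu (m - 1))\<^sup>2))
       + (\<Sum>j=m..n-1. q * (real j powr (- 3 * p / 2) + real j powr (3 - 3 * p / 2) * (S j - mu j)\<^sup>2))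
       = q * GG p n + q * Wf p n e"
    unfolding GG_def Wf_def m_def[symmetric] S_def mu_def
    by (simp add: sum.distrib sum_distrib_left algebra_simps)
  define d where "d = (\<Sum>j=m..n-1. uu \<gamma> n j) / N - cst"
  have "(\<Sum>k=m..n. real k * (U (k - 1) - U k)) / N - cst
      = (real m * U (m - 1) + ((\<Sum>j=m..n-1. U j) - (\<Sum>j=m..n-1. uu \<gamma> n j))) / N + d"
    unfolding sbp d_def using N0 by (simp add: field_simps)
  then have "\<bar>(\<Sum>k=m..n. real k * (U (k - 1) - U k)) / N - cst\<bar>
      \<le> \<bar>real m * U (m - 1) + ((\<Sum>j=m..n-1. U j) - (\<Sum>j=m..n-1. uu \<gamma> n j))\<bar> / N + \<bar>d\<bar>"
    using N0 by (simp add: abs_triangle_ineq[THEN order_trans] )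
  also have "\<bar>real m * U (m - 1) + ((\<Sum>j=m..n-1. U j) - (\<Sum>j=m..n-1. uu \<gamma> n j))\<bar>
      \<le> real m * uu \<gamma> n (m - 1) + q * GG p n + q * Wf p n e"
  proof -
    have u0: "0 \<le> real m * uu \<gamma> n (m - 1)" by (simp add: uu_def psi_def)
    have r0: "0 \<le> real m * (q * (real (m - 1) powr (- 3 * p / 2) + real (m - 1) powr (3 - 3 * p / 2) * (S (m - 1) - mu (m - 1))\<^sup>2))"
      using q0 by simp
    have "real m * U (m - 1) \<ge> 0" using U0 by simp
    then show ?thesis using A1 A2 GW u0 r0 unfolding abs_le_iff by linarith
  qed
  then have "\<bar>real m * U (m - 1) + ((\<Sum>j=m..n-1. U j) - (\<Sum>j=m..n-1. uu \<gamma> n j))\<bar> / N + \<bar>d\<bar>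
      \<le> (real m * uu \<gamma> n (m - 1) + q * GG p n + q * Wf p n e) / N + \<bar>d\<bar>"
    using N0 by (simp add: divide_right_mono)
  also have "\<dots> = An \<gamma> p n + \<bar>d\<bar> + q * Wf p n e / N"
    unfolding An_def N_def[symmetric] q_def[symmetric] m_def[symmetric] by (simp add: add_divide_distrib)
  finally show ?thesis unfolding d_def N_def q_def m_def .
qed


lemma pow_id:
  assumes "1 \<le> j"
  shows "real j powr (3 - 3 * p / 2) * (4 / real j ^ 3) = 4 * real j powr (- 3 * p / 2)"
proof -
  have j0: "0 < real j" using assms by simp
  have "real j ^ 3 = real j powr 3" using powr_realpow[OF j0, of 3] by simp
  then have "real j powr (3 - 3 * p / 2) * (4 / real j ^ 3) = 4 * (real j powr (3 - 3 * p / 2) / real j powr 3)"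
    by simp
  also have "real j powr (3 - 3 * p / 2) / real j powr 3 = real j powr ((3 - 3 * p / 2) - 3)"
    by (rule powr_diff[symmetric])
  also have "(3 - 3 * p / 2) - 3 = - 3 * p / 2" by simp
  finally show ?thesis .
qed

lemma per_n:
  fixes M :: "'w measure" and \<Theta> :: "real \<Rightarrow> 'w \<Rightarrow> nat set set"
  assumes PS: "prob_space M" and g: "\<gamma> > 0" and p: "p = 1 / (\<gamma> + 1)"
    and n: "1 \<le> n" "2 \<le> mm n" "mm n \<le> n"
    and kc: "kingman_coalescent M n \<Theta>"
    and eps: "\<epsilon> > 0"
    and small: "An \<gamma> p n + \<bar>(\<Sum>j=mm n..n-1. uu \<gamma> n j) / real n powr (1 - p) - cst\<bar> \<le> \<epsilon> / 2"
  shows "prob_space.prob M {\<omega> \<in> space M. \<bar>L_prime \<gamma> n \<Theta> \<omega> / real n powr (1 - p) - cst\<bar> > \<epsilon>}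
          \<le> 8 * (\<gamma> + 1) powr p * GG p n / (\<epsilon> * real n powr (1 - p))"
proof -
  interpret prob_space M by (rule PS)
  obtain E :: "nat \<Rightarrow> 'w \<Rightarrow> real" and V :: "nat \<Rightarrow> 'w \<Rightarrow> nat \<times> nat" where
    dist: "\<forall>k\<in>{2..n}. distributed M lborel (E k) (\<lambda>x. ennreal (exponential_density (real (k choose 2)) x))"
    and Vh: "\<forall>k\<in>{2..n}. V k \<in> measurable M (count_space UNIV) \<and>
              (\<forall>p\<in>block_pairs k. prob {\<omega> \<in> space M. V k \<omega> = p} = 1 / real (card (block_pairs k)))"
    and ind: "indep_vars (\<lambda>_. borel \<Otimes>\<^sub>M count_space UNIV)
              (\<lambda>i \<omega>. case i of Inl k \<Rightarrow> (E k \<omega>, (0, 0)) | Inr k \<Rightarrow> (0, V k \<omega>))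
              (Inl ` {2..n} \<union> Inr ` {2..n})"
    and Th: "\<forall>\<omega>\<in>space M. \<forall>t\<ge>0. \<Theta> t \<omega> = coal_path n (\<lambda>k. E k \<omega>) (\<lambda>k. V k \<omega>) t"
    using kc unfolding kingman_coalescent_def by blast
  define N where "N = real n powr (1 - p)"
  define q where "q = (\<gamma> + 1) powr p"
  have N0: "0 < N" unfolding N_def using n by simp
  have q0: "0 < q" unfolding q_def using g by simp
  define W where "W = (\<lambda>\<omega>. Wf p n (\<lambda>i. E i \<omega>))"
  define a where "a = 3 - 3 * p / 2"
  define Dsq where "Dsq = (\<lambda>j \<omega>. ((\<Sum>i=j+1..n. E i \<omega>) - (2 / real j - 2 / real n))\<^sup>2)"
  have Wform: "W \<omega> = real (mm n) * (real (mm n - 1) powr a * Dsq (mm n - 1) \<omega>) + (\<Sum>j=mm n..n-1. real j powr a * Dsq j \<omega>)" for \<omega>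
    unfolding W_def Wf_def a_def Dsq_def ..
  have intD: "integrable M (Dsq j)" if "1 \<le> j" "j \<le> n" for j
    unfolding Dsq_def by (rule second_moment(1)[OF dist ind that])
  have expD: "expectation (Dsq j) \<le> 4 / real j ^ 3" if "1 \<le> j" "j \<le> n" for j
    unfolding Dsq_def by (rule second_moment(2)[OF dist ind that])
  have j1: "1 \<le> mm n - 1" "mm n - 1 \<le> n" using n by auto
  have intW: "integrable M W"
    unfolding Wform using intD[OF j1] intD n by (intro Bochner_Integration.integrable_add integrable_mult_right Bochner_Integration.integrable_sum) auto
  have eW: "expectation W \<le> 4 * GG p n"
  proof -
    have "expectation W = real (mm n) * (real (mm n - 1) powr a * expectation (Dsq (mm n - 1))) + (\<Sum>j=mm n..n-1. real j powr a * expectation (Dsq j))"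
    proof -
      have i2: "integrable M (\<lambda>\<omega>. \<Sum>j=mm n..n-1. real j powr a * Dsq j \<omega>)"
        using intD n by (intro Bochner_Integration.integrable_sum integrable_mult_right) auto
      have i1: "integrable M (\<lambda>\<omega>. real (mm n) * (real (mm n - 1) powr a * Dsq (mm n - 1) \<omega>))"
        using intD[OF j1] by simp
      have s: "expectation (\<lambda>\<omega>. \<Sum>j=mm n..n-1. real j powr a * Dsq j \<omega>) = (\<Sum>j=mm n..n-1. expectation (\<lambda>\<omega>. real j powr a * Dsq j \<omega>))"
        using intD n by (intro Bochner_Integration.integral_sum integrable_mult_right) auto
      show ?thesis unfolding Wform Bochner_Integration.integral_add[OF i1 i2] s by simp
    qed
    also have "\<dots> \<le> real (mm n) * (real (mm n - 1) powr a * (4 / real (mm n - 1) ^ 3)) + (\<Sum>j=mm n..n-1. real j powr a * (4 / real j ^ 3))"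
    proof (rule add_mono)
      show "real (mm n) * (real (mm n - 1) powr a * expectation (Dsq (mm n - 1))) \<le> real (mm n) * (real (mm n - 1) powr a * (4 / real (mm n - 1) ^ 3))"
        by (intro mult_left_mono expD[OF j1]) auto
      show "(\<Sum>j=mm n..n-1. real j powr a * expectation (Dsq j)) \<le> (\<Sum>j=mm n..n-1. real j powr a * (4 / real j ^ 3))"
      proof (rule sum_mono)
        fix j assume "j \<in> {mm n..n-1}"
        then show "real j powr a * expectation (Dsq j) \<le> real j powr a * (4 / real j ^ 3)"
          using n by (intro mult_left_mono expD) auto
      qed
    qed
    also have "\<dots> = 4 * GG p n"
    proof -
      have t1: "real (mm n) * (real (mm n - 1) powr a * (4 / real (mm n - 1) ^ 3)) = 4 * (real (mm n) * real (mm n - 1) powr (- 3 * p / 2))"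
        using pow_id[OF j1(1), of p] unfolding a_def by simp
      have t2: "(\<Sum>j=mm n..n-1. real j powr a * (4 / real j ^ 3)) = (\<Sum>j=mm n..n-1. 4 * real j powr (- 3 * p / 2))"
        unfolding a_def using n by (intro sum.cong refl pow_id) auto
      show ?thesis unfolding t1 t2 GG_def by (simp add: sum_distrib_left distrib_left)
    qed
    finally show ?thesis .
  qed
  define c where "c = \<epsilon> * N / (2 * q)"
  have c0: "0 < c" unfolding c_def using eps N0 q0 by simp
  have Wmeas[measurable]: "W \<in> borel_measurable M" using intW by auto
  define B where "B = {\<omega> \<in> space M. c \<le> W \<omega>}"
  have Bs: "B \<in> sets M" unfolding B_def by measurable
  have AEg: "AE \<omega> in M. \<forall>k\<in>{2..n}. E k \<omega> > 0 \<and> V k \<omega> \<in> block_pairs k"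
    by (rule good_AE[OF dist Vh])
  have imp: "AE \<omega> in M. \<omega> \<in> {\<omega> \<in> space M. \<bar>L_prime \<gamma> n \<Theta> \<omega> / real n powr (1 - p) - cst\<bar> > \<epsilon>} \<longrightarrow> \<omega> \<in> B"
    using AEg
  proof (rule AE_mp, intro AE_I2 impI)
    fix \<omega> assume \<omega>: "\<omega> \<in> space M" and good: "\<forall>k\<in>{2..n}. E k \<omega> > 0 \<and> V k \<omega> \<in> block_pairs k"
      and inA: "\<omega> \<in> {\<omega> \<in> space M. \<bar>L_prime \<gamma> n \<Theta> \<omega> / real n powr (1 - p) - cst\<bar> > \<epsilon>}"
    have pos: "\<forall>i\<in>{2..n}. E i \<omega> > 0" using good by blast
    have val: "\<forall>k\<in>{2..n}. V k \<omega> \<in> block_pairs k" using good by blast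
    have Th\<omega>: "\<forall>t\<ge>0. \<Theta> t \<omega> = coal_path n (\<lambda>k. E k \<omega>) (\<lambda>k. V k \<omega>) t" using Th \<omega> by blast
    define U where "U = (\<lambda>k. U_time \<gamma> \<Theta> k \<omega>)"
    have Ueq: "U k = psi \<gamma> (\<Sum>i=k+1..n. E i \<omega>)" if "1 \<le> k" "k \<le> n" for k
      unfolding U_def by (rule U_time_eq[where E=E and V=V and \<omega>=\<omega> and \<Theta>=\<Theta>, OF g n(1) pos val Th\<omega> that])
    have L: "L_prime \<gamma> n \<Theta> \<omega> = (\<Sum>k=mm n..n. real k * (U (k - 1) - U k))"
      unfolding L_prime_def mm_def U_def Let_def ..
    have "\<bar>L_prime \<gamma> n \<Theta> \<omega> / real n powr (1 - p) - cst\<bar>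
        \<le> An \<gamma> p n + \<bar>(\<Sum>j=mm n..n-1. uu \<gamma> n j) / real n powr (1 - p) - cst\<bar> + q * W \<omega> / N"
      unfolding L W_def q_def N_def by (rule pointwise_bound[OF g p n pos Ueq])
    then have "\<epsilon> < \<epsilon> / 2 + q * W \<omega> / N" using inA small by auto
    then have "\<epsilon> / 2 < q * W \<omega> / N" by linarith
    then have "\<epsilon> * N / 2 < q * W \<omega>" using N0 by (simp add: field_simps)
    then have "c < W \<omega>" unfolding c_def using q0 by (simp add: field_simps)
    then show "\<omega> \<in> B" unfolding B_def using \<omega> by simp
  qed
  have "prob {\<omega> \<in> space M. \<bar>L_prime \<gamma> n \<Theta> \<omega> / real n powr (1 - p) - cst\<bar> > \<epsilon>} \<le> prob B"
    by (rule finite_measure_mono_AE[OF imp Bs])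
  also have "prob B \<le> expectation W / c"
    unfolding B_def
  proof (rule integral_Markov_inequality_measure[OF intW _ _ c0])
    show "space M \<in> sets M" by simp
    show "AE x in M. 0 \<le> W x" unfolding W_def Wf_def by (intro AE_I2) (auto intro!: add_nonneg_nonneg sum_nonneg mult_nonneg_nonneg)
  qed
  also have "\<dots> \<le> 4 * GG p n / c" using eW c0 by (intro divide_right_mono) auto
  also have "\<dots> = 8 * (\<gamma> + 1) powr p * GG p n / (\<epsilon> * real n powr (1 - p))"
    unfolding c_def q_def N_def using eps N0 q0 by (simp add: field_simps N_def q_def)
  finally show ?thesis .
qed


lemma cst_eq:
  assumes g: "\<gamma> > 0" and p: "p = 1 / (\<gamma> + 1)" and a: "\<alpha> = \<gamma> / (1 + \<gamma>)"
  shows "\<alpha> = 1 - p" "2 powr (1 - \<alpha>) * (1 - \<alpha>) powr \<alpha> * pi / sin (pi * \<alpha>) = (2 * (\<gamma> + 1)) powr p * (p * pi / sin (pi * p))"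
proof -
  show ap: "\<alpha> = 1 - p" unfolding a p using g by (simp add: field_simps)
  have p0: "0 < p" using p_bounds[OF g p] by simp
  have gp: "\<gamma> + 1 = 1 / p" unfolding p using g by simp
  have s: "sin (pi * (1 - p)) = sin (pi * p)"
    by (simp add: right_diff_distrib sin_diff)
  have "(2 * (\<gamma> + 1)) powr p = 2 powr p * (1 / p) powr p" unfolding gp by (rule powr_mult)
  also have "(1 / p) powr p = p powr (- p)" using p0 by (simp add: powr_minus_divide powr_divide)
  finally have k: "(2 * (\<gamma> + 1)) powr p * p = 2 powr p * p powr (1 - p)"
    using p0 by (simp add: powr_diff powr_minus_divide field_simps)
  show "2 powr (1 - \<alpha>) * (1 - \<alpha>) powr \<alpha> * pi / sin (pi * \<alpha>) = (2 * (\<gamma> + 1)) powr p * (p * pi / sin (pi * p))"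
    unfolding ap using k s by (simp add: field_simps)
qed

theorem lemma18:
  fixes M :: "'w measure" and \<gamma> \<alpha> :: real
    and \<Theta> :: "nat \<Rightarrow> real \<Rightarrow> 'w \<Rightarrow> nat set set"
  assumes "prob_space M"
    and "\<gamma> > 0"
    and "\<alpha> = \<gamma> / (1 + \<gamma>)"
    and "\<And>n. n \<ge> 1 \<Longrightarrow> kingman_coalescent M n (\<Theta> n)"
  shows "\<forall>\<epsilon>>0. ((\<lambda>n. prob_space.prob M
            {\<omega> \<in> space M. \<bar>L_prime \<gamma> n (\<Theta> n) \<omega> / real n powr \<alpha>
               - 2 powr (1 - \<alpha>) * (1 - \<alpha>) powr \<alpha> * pi / sin (pi * \<alpha>)\<bar> > \<epsilon>})
          \<longlongrightarrow> 0) sequentially"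
proof (intro allI impI)
  fix \<epsilon> :: real assume eps: "\<epsilon> > 0"
  note PS = assms(1) and g = assms(2)
  define p where "p = 1 / (\<gamma> + 1)"
  define cst where "cst = (2 * (\<gamma> + 1)) powr p * (p * pi / sin (pi * p))"
  have ap: "\<alpha> = 1 - p" and ce: "2 powr (1 - \<alpha>) * (1 - \<alpha>) powr \<alpha> * pi / sin (pi * \<alpha>) = cst"
    using cst_eq[OF g p_def assms(3)] unfolding cst_def by auto
  have p01: "0 < p" "p < 1" using p_bounds[OF g p_def] by auto
  define P where "P = (\<lambda>n. prob_space.prob M
            {\<omega> \<in> space M. \<bar>L_prime \<gamma> n (\<Theta> n) \<omega> / real n powr (1 - p) - cst\<bar> > \<epsilon>})"
  have dl: "(\<lambda>n. \<bar>(\<Sum>j=mm n..n-1. uu \<gamma> n j) / real n powr (1 - p) - cst\<bar>) \<longlonglongrightarrow> 0"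
  proof -
    have "(\<lambda>n. (\<Sum>j=mm n..n-1. uu \<gamma> n j) / real n powr (1 - p) - cst) \<longlonglongrightarrow> cst - cst"
      using dn_lim[OF g p_def] unfolding cst_def by (intro tendsto_diff) auto
    then show ?thesis using tendsto_rabs_zero by fastforce
  qed
  have sm: "(\<lambda>n. An \<gamma> p n + \<bar>(\<Sum>j=mm n..n-1. uu \<gamma> n j) / real n powr (1 - p) - cst\<bar>) \<longlonglongrightarrow> 0"
    using tendsto_add[OF An_lim[OF g p_def] dl] by simp
  have evs: "eventually (\<lambda>n. An \<gamma> p n + \<bar>(\<Sum>j=mm n..n-1. uu \<gamma> n j) / real n powr (1 - p) - cst\<bar> < \<epsilon> / 2) sequentially"
    using sm eps by (intro order_tendstoD(2)) auto
  have "P \<longlonglongrightarrow> 0"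
  proof (rule real_tendsto_sandwich[where f="\<lambda>_. 0" and h="\<lambda>n. 8 * (\<gamma> + 1) powr p / \<epsilon> * (GG p n / real n powr (1 - p))"])
    show "\<forall>\<^sub>F n in sequentially. 0 \<le> P n"
      unfolding P_def using prob_space.prob_space[OF PS] by (auto intro!: always_eventually measure_nonneg)
    show "\<forall>\<^sub>F n in sequentially. P n \<le> 8 * (\<gamma> + 1) powr p / \<epsilon> * (GG p n / real n powr (1 - p))"
      using evs mm_le
    proof eventually_elim
      case (elim n)
      have "P n \<le> 8 * (\<gamma> + 1) powr p * GG p n / (\<epsilon> * real n powr (1 - p))"
        unfolding P_def using elim
        by (intro per_n[OF PS g p_def _ _ _ assms(4) eps]) auto
      then show ?case by simp
    qed
    show "(\<lambda>n. 8 * (\<gamma> + 1) powr p / \<epsilon> * (GG p n / real n powr (1 - p))) \<longlonglongrightarrow> 0"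
      using tendsto_mult_left[OF GG_lim[OF p01], of "8 * (\<gamma> + 1) powr p / \<epsilon>"] by simp
  qed simp
  note PL = this
  show "((\<lambda>n. prob_space.prob M
            {\<omega> \<in> space M. \<bar>L_prime \<gamma> n (\<Theta> n) \<omega> / real n powr \<alpha>
               - 2 powr (1 - \<alpha>) * (1 - \<alpha>) powr \<alpha> * pi / sin (pi * \<alpha>)\<bar> > \<epsilon>})
          \<longlongrightarrow> 0) sequentially"
    unfolding ce unfolding ap using PL unfolding P_def .
qed


end
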